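(* Let $m,n,m',n'\in\mathbb N$, $\delta,\delta'\in\{\pm1\}$, $\lambda,\lambda'\in\mathbb C\setminus\{0\}$, and let $\ell,\ell'$ be integers with $0\le\ell\le m+n$ and $0\le\ell'\le m'+n'$. Then the $\mathcal H_q$-module $(L_m\otimes L_n)^{\delta,\lambda}(\delta q^{m+n-2\ell})$ is isomorphic to $(L_{m'}\otimes L_{n'})^{\delta',\lambda'}(\delta' q^{m'+n'-2\ell'})$ if and only if $\delta=\delta'$ and $(m',n',\ell',\lambda')\in\{(m,n,\ell,\lambda),\ (m+n-\ell,\ell,n,\lambda q^{\ell-n}),\ (\ell,m+n-\ell,m,\lambda q^{\ell-m}),\ (n,m,m+n-\ell,\lambda q^{2\ell-m-n})\}$.
   Context: Throughout, $q$ is a nonzero complex number that is not a root of unity; $[x,y]=xy-yx$, $[x,y]_q=qxy-q^{-1}yx$, $[n]_q=\frac{q^n-q^{-n}}{q-q^{-1}}$. $\mathfrak{W}_q$ is the algebra over $\mathbb C$ generated by $E_1,E_2,F_1,F_2,K_1^{\pm1},K_2^{\pm1},I^{\pm1}$ subject to: $I$ is central; $II^{-1}=I^{-1}I=1$, $K_1K_1^{-1}=K_1^{-1}K_1=1$, $K_2K_2^{-1}=K_2^{-1}K_2=1$; $[K_1,E_2]=[K_1,F_2]=[K_1,K_2]=[K_2,E_1]=[K_2,F_1]=0$; $[E_1,K_1]_q=[K_1,F_1]_q=[E_2,K_2]_q=[K_2,F_2]_q=0$; $[E_1,E_2]=[E_1,F_2]=[F_1,E_2]=[F_1,F_2]=0$;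 $[E_1,F_1]=\frac{K_1-IK_1^{-1}}{q-q^{-1}}$; $[E_2,F_2]=\frac{IK_2-K_2^{-1}}{q-q^{-1}}$. The universal $q$-Hahn algebra $\mathcal H_q$ is the algebra generated by $A,B,C$ subject to the relations that each of $\frac{[B,C]_q}{q^2-q^{-2}}+A$, $[C,A]_q$, $\frac{[A,B]_q}{q^2-q^{-2}}+C$ commutes with $A,B,C$. Every $\mathfrak{W}_q$-module is an $\mathcal H_q$-module via the algebra homomorphism $\widetilde\natural:\mathcal H_q\to\mathfrak{W}_q$ with $A\mapsto K_2^{-1}$, $B\mapsto (q-q^{-1})^2(E_1+K_1^{-1}E_2)(F_1K_2+F_2)+q^{-1}K_1K_2+qK_1^{-1}K_2^{-1}$, $C\mapsto IK_1^{-1}-q(q-q^{-1})^2E_1F_2K_2^{-1}$. $(L_m\otimes L_n)^{\delta,\lambda}$ is the $\mathfrak{W}_q$-module with basis $v_i^{(m)}\otimes v_j^{(n)}$ ($0\le i\le m$, $0\le j\le n$) on which: $E_1v_i^{(m)}\otimes v_j^{(n)}=\lambda[i]_q[m-i+1]_qv_{i-1}^{(m)}\otimes v_j^{(n)}$ (zero if $i=0$); $E_2v_i^{(m)}\otimes v_j^{(n)}=\delta\lambda[j]_q[n-j+1]_qv_i^{(m)}\otimes v_{j-1}^{(n)}$ (zero if $j=0$); $F_1v_i^{(m)}\otimes v_j^{(n)}=v_{i+1}^{(m)}\otimes v_j^{(n)}$ (zero if $i=m$); $F_2v_i^{(m)}\otimes v_j^{(n)}=v_i^{(m)}\otimes v_{j+1}^{(n)}$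 (zero if $j=n$); $K_1$ acts by $\lambda q^{m-2i}$, $K_2$ by $\delta\lambda^{-1}q^{n-2j}$, $I$ by $\lambda^2$. For a $\mathfrak W_q$-module $V$ and $\theta\in\mathbb C$, $V(\theta)$ denotes the $\theta$-eigenspace of $K_1K_2$ on $V$ (an $\mathcal H_q$-submodule). *)

theory Defs
  imports Complex_Main
begin

text \<open>Vectors of the module (L_m \<otimes> L_n)^{delta,lambda} are represented by their
coordinate functions c, meaning sum over i,j of c i j times v_i \<otimes> v_j, where
c i j = 0 whenever i > m or j > n.\<close>

type_synonym vec = "nat \<Rightarrow> nat \<Rightarrow> complex"

definition qnum :: "complex \<Rightarrow> nat \<Rightarrow> complex" where
  "qnum q k = (q ^ k - inverse q ^ k) / (q - inverse q)"

definition tens_space :: "nat \<Rightarrow> nat \<Rightarrow> vec set" where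
  "tens_space m n = {c. \<forall>i j. (m < i \<or> n < j) \<longrightarrow> c i j = 0}"

definition vadd :: "vec \<Rightarrow> vec \<Rightarrow> vec" where
  "vadd u w = (\<lambda>i j. u i j + w i j)"

definition vsmul :: "complex \<Rightarrow> vec \<Rightarrow> vec" where
  "vsmul a u = (\<lambda>i j. a * u i j)"

definition opE1 :: "complex \<Rightarrow> nat \<Rightarrow> nat \<Rightarrow> complex \<Rightarrow> complex \<Rightarrow> vec \<Rightarrow> vec" where
  "opE1 q m n d l c = (\<lambda>i j. if i < m then l * qnum q (i+1) * qnum q (m - i) * c (i+1) j else 0)"

definition opE2 :: "complex \<Rightarrow> nat \<Rightarrow> nat \<Rightarrow> complex \<Rightarrow> complex \<Rightarrow> vec \<Rightarrow> vec" where
  "opE2 q m n d l c = (\<lambda>i j. if j < n then d * l * qnum q (j+1) * qnum q (n - j) * c i (j+1) else 0)"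

definition opF1 :: "complex \<Rightarrow> nat \<Rightarrow> nat \<Rightarrow> complex \<Rightarrow> complex \<Rightarrow> vec \<Rightarrow> vec" where
  "opF1 q m n d l c = (\<lambda>i j. if 0 < i \<and> i \<le> m then c (i-1) j else 0)"

definition opF2 :: "complex \<Rightarrow> nat \<Rightarrow> nat \<Rightarrow> complex \<Rightarrow> complex \<Rightarrow> vec \<Rightarrow> vec" where
  "opF2 q m n d l c = (\<lambda>i j. if 0 < j \<and> j \<le> n then c i (j-1) else 0)"

definition opK1 :: "complex \<Rightarrow> nat \<Rightarrow> nat \<Rightarrow> complex \<Rightarrow> complex \<Rightarrow> vec \<Rightarrow> vec" where
  "opK1 q m n d l c = (\<lambda>i j. l * q powi (int m - 2 * int i) * c i j)"

definition opK1inv :: "complex \<Rightarrow> nat \<Rightarrow> nat \<Rightarrow> complex \<Rightarrow> complex \<Rightarrow> vec \<Rightarrow> vec" where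
  "opK1inv q m n d l c = (\<lambda>i j. inverse (l * q powi (int m - 2 * int i)) * c i j)"

definition opK2 :: "complex \<Rightarrow> nat \<Rightarrow> nat \<Rightarrow> complex \<Rightarrow> complex \<Rightarrow> vec \<Rightarrow> vec" where
  "opK2 q m n d l c = (\<lambda>i j. d * inverse l * q powi (int n - 2 * int j) * c i j)"

definition opK2inv :: "complex \<Rightarrow> nat \<Rightarrow> nat \<Rightarrow> complex \<Rightarrow> complex \<Rightarrow> vec \<Rightarrow> vec" where
  "opK2inv q m n d l c = (\<lambda>i j. inverse (d * inverse l * q powi (int n - 2 * int j)) * c i j)"

definition opI :: "complex \<Rightarrow> nat \<Rightarrow> nat \<Rightarrow> complex \<Rightarrow> complex \<Rightarrow> vec \<Rightarrow> vec" where
  "opI q m n d l c = vsmul (l\<^sup>2) c"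

text \<open>Images of the generators A, B, C of H_q under the homomorphism to W_q.\<close>

definition actA :: "complex \<Rightarrow> nat \<Rightarrow> nat \<Rightarrow> complex \<Rightarrow> complex \<Rightarrow> vec \<Rightarrow> vec" where
  "actA q m n d l c = opK2inv q m n d l c"

definition actB :: "complex \<Rightarrow> nat \<Rightarrow> nat \<Rightarrow> complex \<Rightarrow> complex \<Rightarrow> vec \<Rightarrow> vec" where
  "actB q m n d l c =
     (let E1 = opE1 q m n d l; E2 = opE2 q m n d l; F1 = opF1 q m n d l; F2 = opF2 q m n d l;
          K1 = opK1 q m n d l; K2 = opK2 q m n d l; K1i = opK1inv q m n d l; K2i = opK2inv q m n d l;
          w = vadd (F1 (K2 c)) (F2 c)
      in vadd (vadd (vsmul ((q - inverse q)\<^sup>2) (vadd (E1 w) (K1i (E2 w))))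
                    (vsmul (inverse q) (K1 (K2 c))))
              (vsmul q (K1i (K2i c))))"

definition actC :: "complex \<Rightarrow> nat \<Rightarrow> nat \<Rightarrow> complex \<Rightarrow> complex \<Rightarrow> vec \<Rightarrow> vec" where
  "actC q m n d l c =
     vadd (opI q m n d l (opK1inv q m n d l c))
          (vsmul (- q * (q - inverse q)\<^sup>2)
                 (opE1 q m n d l (opF2 q m n d l (opK2inv q m n d l c))))"

definition eig_space :: "complex \<Rightarrow> nat \<Rightarrow> nat \<Rightarrow> complex \<Rightarrow> complex \<Rightarrow> complex \<Rightarrow> vec set" where
  "eig_space q m n d l \<theta> =
     {c \<in> tens_space m n. opK1 q m n d l (opK2 q m n d l c) = vsmul \<theta> c}"

definition Hq_iso ::
  "complex \<Rightarrow> nat \<Rightarrow> nat \<Rightarrow> complex \<Rightarrow> complex \<Rightarrow> complex \<Rightarrow>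
   nat \<Rightarrow> nat \<Rightarrow> complex \<Rightarrow> complex \<Rightarrow> complex \<Rightarrow> bool" where
  "Hq_iso q m n d l \<theta> m' n' d' l' \<theta>' =
     (let V = eig_space q m n d l \<theta>; W = eig_space q m' n' d' l' \<theta>' in
      \<exists>f. bij_betw f V W
        \<and> (\<forall>u\<in>V. \<forall>w\<in>V. f (vadd u w) = vadd (f u) (f w))
        \<and> (\<forall>a. \<forall>u\<in>V. f (vsmul a u) = vsmul a (f u))
        \<and> (\<forall>u\<in>V. f (actA q m n d l u) = actA q m' n' d' l' (f u))
        \<and> (\<forall>u\<in>V. f (actB q m n d l u) = actB q m' n' d' l' (f u))
        \<and> (\<forall>u\<in>V. f (actC q m n d l u) = actC q m' n' d' l' (f u)))"

end

theory Submission
  imports Defs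
begin


definition qok :: "complex \<Rightarrow> bool" where
  "qok q \<longleftrightarrow> q \<noteq> 0 \<and> (\<forall>r::nat. 0 < r \<longrightarrow> q ^ r \<noteq> 1)"

lemma qok_nz: "qok q \<Longrightarrow> q \<noteq> 0" by (simp add: qok_def)

lemma qpow_eq1: assumes "qok q" "q powi a = 1" shows "a = 0"
proof (rule ccontr)
  assume "a \<noteq> 0"
  show False
  proof (cases "a > 0")
    case True
    then have "q ^ nat a = 1" using assms(2) by (simp add: power_int_def)
    thus False using assms(1) True by (simp add: qok_def)
  next
    case False
    with \<open>a \<noteq> 0\<close> have "a < 0" by simp
    then have "inverse q ^ nat (-a) = 1" using assms(2) by (simp add: power_int_def)
    then have "q ^ nat (-a) = 1" by (metis power_inverse inverse_1 inverse_inverse_eq)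
    thus False using assms(1) \<open>a < 0\<close> by (simp add: qok_def)
  qed
qed

lemma qpow_inj: assumes "qok q" "q powi a = q powi b" shows "a = b"
proof -
  have q0: "q \<noteq> 0" using assms(1) by (simp add: qok_def)
  have "q powi (a - b) = 1" using assms(2) q0 by (simp add: power_int_diff)
  then have "a - b = 0" using qpow_eq1[OF assms(1)] by blast
  thus ?thesis by simp
qed

lemma qpow_not_neg: assumes "qok q" shows "q powi a \<noteq> - (q powi b)"
proof
  assume h: "q powi a = - (q powi b)"
  have q0: "q \<noteq> 0" using assms(1) by (simp add: qok_def)
  have "(q powi a)^2 = (q powi b)^2" using h by simp
  then have "q powi (a * int 2) = q powi (b * int 2)" by (metis power_int_power')
  then have "a * int 2 = b * int 2" using qpow_inj[OF assms] by blast
  then have "a = b" by simp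
  then have "q powi a = 0" using h by simp
  thus False using q0 by simp
qed

lemma sign_pow_eq:
  assumes "qok q" "d \<in> {1,-1}" "d' \<in> {1,-1}" "d * q powi a = d' * q powi b"
  shows "d = d' \<and> a = b"
proof -
  have q0: "q \<noteq> 0" using qok_nz[OF assms(1)] .
  have dd: "d = d'"
  proof (rule ccontr)
    assume "d \<noteq> d'"
    then have "d' = - d" using assms(2,3) by auto
    then have "d * q powi a = d * (- (q powi b))" using assms(4) by simp
    moreover have "d \<noteq> 0" using assms(2) by auto
    ultimately have "q powi a = - (q powi b)" using mult_left_cancel by blast
    thus False using qpow_not_neg[OF assms(1)] by blast
  qed
  moreover have "d \<noteq> 0" using assms(2) by auto
  ultimately have "q powi a = q powi b" using assms(4) by simp
  thus ?thesis using dd qpow_inj[OF assms(1)] by simp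
qed

lemma qsq_ne1: "qok q \<Longrightarrow> q^2 \<noteq> 1" by (simp add: qok_def)

lemma qmi_nz: assumes "qok q" shows "q - inverse q \<noteq> 0"
proof
  assume "q - inverse q = 0"
  then have "q * q = 1" using qok_nz[OF assms] by (simp add: field_simps)
  thus False using qsq_ne1[OF assms] by (simp add: power2_eq_square)
qed

lemma qnum0[simp]: "qnum q 0 = 0" by (simp add: qnum_def)

lemma qnum_nz: assumes "qok q" "0 < k" shows "qnum q k \<noteq> 0"
proof
  assume "qnum q k = 0"
  then have "q ^ k - inverse q ^ k = 0" using qmi_nz[OF assms(1)] by (simp add: qnum_def)
  then have "q ^ k * q ^ k = 1" using qok_nz[OF assms(1)]
    by (simp add: field_simps power_inverse)
  then have "q ^ (2*k) = 1" by (metis power_even_eq power2_eq_square)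
  thus False using assms by (simp add: qok_def)
qed

lemma qmi_mult_qnum: assumes "qok q"
  shows "(q - inverse q) * qnum q k = q powi int k - q powi (- int k)"
  using qmi_nz[OF assms] by (simp add: qnum_def power_int_minus power_inverse)

lemma pair_pow:
  assumes "qok q" "q powi a + q powi b = q powi a' + q powi b'" "a + b = a' + b'"
  shows "(a = a' \<and> b = b') \<or> (a = b' \<and> b = a')"
proof -
  have q0: "q \<noteq> 0" using qok_nz[OF assms(1)] .
  let ?x = "q powi a" and ?x' = "q powi a'" and ?y = "q powi b" and ?y' = "q powi b'"
  have xy: "?x * ?y = ?x' * ?y'" using assms(3) q0 by (metis power_int_add)
  have "(?x - ?x') * (?x - ?y') = ?x * ?x - ?x * ?x' - ?x * ?y' + ?x' * ?y'" by (simp only: algebra_simps)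
  also have "\<dots> = ?x * (?x + ?y - ?x' - ?y')" unfolding xy[symmetric] by (simp only: algebra_simps)
  also have "\<dots> = 0" using assms(2) by simp
  finally have "?x = ?x' \<or> ?x = ?y'" by simp
  thus ?thesis
  proof
    assume "?x = ?x'" then have "a = a'" using qpow_inj[OF assms(1)] by simp
    thus ?thesis using assms(3) by simp
  next
    assume "?x = ?y'" then have "a = b'" using qpow_inj[OF assms(1)] by simp
    thus ?thesis using assms(3) by simp
  qed
qed



definition aD :: "complex \<Rightarrow> nat \<Rightarrow> nat \<Rightarrow> complex \<Rightarrow> complex \<Rightarrow> nat \<Rightarrow> nat \<Rightarrow> complex" where
  "aD q m n d l i j = inverse (d * inverse l * q powi (int n - 2*int j))"
definition cD :: "complex \<Rightarrow> nat \<Rightarrow> nat \<Rightarrow> complex \<Rightarrow> complex \<Rightarrow> nat \<Rightarrow> nat \<Rightarrow> complex" where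
  "cD q m n d l i j = l^2 * inverse (l * q powi (int m - 2*int i))"
definition cM :: "complex \<Rightarrow> nat \<Rightarrow> nat \<Rightarrow> complex \<Rightarrow> complex \<Rightarrow> nat \<Rightarrow> nat \<Rightarrow> complex" where
  "cM q m n d l i j = (if i < m \<and> 0 < j \<and> j \<le> n then
     - q * (q - inverse q)^2 * (l * qnum q (i+1) * qnum q (m-i) *
        inverse (d * inverse l * q powi (int n - 2*int (j-1)))) else 0)"
definition bD :: "complex \<Rightarrow> nat \<Rightarrow> nat \<Rightarrow> complex \<Rightarrow> complex \<Rightarrow> nat \<Rightarrow> nat \<Rightarrow> complex" where
  "bD q m n d l i j = (q - inverse q)^2 *
      ((if i < m then l * qnum q (i+1) * qnum q (m-i) * (d * inverse l * q powi (int n - 2*int j)) else 0)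
     + (if j < n then inverse (l * q powi (int m - 2*int i)) * (d * l * qnum q (j+1) * qnum q (n-j)) else 0))
     + inverse q * (l * q powi (int m - 2*int i) * (d * inverse l * q powi (int n - 2*int j)))
     + q * (inverse (l * q powi (int m - 2*int i)) * inverse (d * inverse l * q powi (int n - 2*int j)))"
definition bM :: "complex \<Rightarrow> nat \<Rightarrow> nat \<Rightarrow> complex \<Rightarrow> complex \<Rightarrow> nat \<Rightarrow> nat \<Rightarrow> complex" where
  "bM q m n d l i j = (if i < m \<and> 0 < j \<and> j \<le> n then (q - inverse q)^2 * (l * qnum q (i+1) * qnum q (m-i)) else 0)"
definition bP :: "complex \<Rightarrow> nat \<Rightarrow> nat \<Rightarrow> complex \<Rightarrow> complex \<Rightarrow> nat \<Rightarrow> nat \<Rightarrow> complex" where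
  "bP q m n d l i j = (if j < n \<and> 0 < i \<and> i \<le> m then (q - inverse q)^2 *
      (inverse (l * q powi (int m - 2*int i)) * (d * l * qnum q (j+1) * qnum q (n-j)) *
       (d * inverse l * q powi (int n - 2*int (j+1)))) else 0)"

lemma actA_coord: "actA q m n d l c i j = aD q m n d l i j * c i j"
  by (simp add: actA_def opK2inv_def aD_def)

lemma actC_coord: "actC q m n d l c i j = cD q m n d l i j * c i j + cM q m n d l i j * c (i+1) (j-1)"
  by (simp add: actC_def opI_def opK1inv_def opE1_def opF2_def opK2inv_def vadd_def vsmul_def cD_def cM_def)

lemma actB_coord: "actB q m n d l c i j = bD q m n d l i j * c i j + bM q m n d l i j * c (i+1) (j-1)
    + bP q m n d l i j * c (i-1) (j+1)"
  by (simp add: actB_def opE1_def opE2_def opF1_def opF2_def opK1_def opK2_def opK1inv_def opK2inv_def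
                vadd_def vsmul_def Let_def bD_def bM_def bP_def algebra_simps)



definition vld :: "nat \<Rightarrow> nat \<Rightarrow> nat \<Rightarrow> nat \<Rightarrow> nat \<Rightarrow> bool" where
  "vld m n k i j \<longleftrightarrow> i + j = k \<and> i \<le> m \<and> j \<le> n"

definition Vset :: "nat \<Rightarrow> nat \<Rightarrow> nat \<Rightarrow> vec set" where
  "Vset m n k = {c. \<forall>i j. \<not> vld m n k i j \<longrightarrow> c i j = 0}"

lemma pmul: "(q::complex) \<noteq> 0 \<Longrightarrow> q powi a * q powi b = q powi (a + b)"
  by (rule power_int_add[symmetric]) simp

lemma eig_Vset:
  assumes "qok q" "d \<in> {1,-1}" "l \<noteq> 0"
  shows "eig_space q m n d l (d * q powi (int m + int n - 2 * int k)) = Vset m n k"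
proof -
  have q0: "q \<noteq> 0" using qok_nz[OF assms(1)] .
  have d0: "d \<noteq> 0" using assms(2) by auto
  have coef: "l * q powi (int m - 2*int i) * (d * inverse l * q powi (int n - 2*int j) * x)
       = d * q powi (int m + int n - 2*int i - 2*int j) * x" for i j x
  proof -
    have "l * q powi (int m - 2*int i) * (d * inverse l * q powi (int n - 2*int j) * x)
        = d * (q powi (int m - 2*int i) * q powi (int n - 2*int j)) * x * (l * inverse l)"
      by (simp only: ac_simps)
    also have "\<dots> = d * q powi (int m + int n - 2*int i - 2*int j) * x"
      using assms(3) q0 by (simp add: pmul algebra_simps)
    finally show ?thesis .
  qed
  have key: "(d * q powi (int m + int n - 2*int i - 2*int j) * x = d * q powi (int m + int n - 2 * int k) * x)
      \<longleftrightarrow> (x = 0 \<or> i + j = k)" for i j x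
  proof
    assume h: "d * q powi (int m + int n - 2*int i - 2*int j) * x = d * q powi (int m + int n - 2 * int k) * x"
    show "x = 0 \<or> i + j = k"
    proof (cases "x = 0")
      case False
      then have "q powi (int m + int n - 2*int i - 2*int j) = q powi (int m + int n - 2 * int k)"
        using h d0 by simp
      then have "int m + int n - 2*int i - 2*int j = int m + int n - 2 * int k" using qpow_inj[OF assms(1)] by blast
      thus ?thesis by simp
    qed simp
  next
    assume "x = 0 \<or> i + j = k"
    thus "d * q powi (int m + int n - 2*int i - 2*int j) * x = d * q powi (int m + int n - 2 * int k) * x"
      by (auto simp: algebra_simps)
  qed
  show ?thesis
    unfolding eig_space_def Vset_def tens_space_def vld_def opK1_def opK2_def vsmul_def fun_eq_iff coef key
    by auto
qed

lemma Vset_zero: "c \<in> Vset m n k \<Longrightarrow> \<not> vld m n k i j \<Longrightarrow> c i j = 0"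
  by (simp add: Vset_def)

lemma Vset_add: "u \<in> Vset m n k \<Longrightarrow> w \<in> Vset m n k \<Longrightarrow> vadd u w \<in> Vset m n k"
  by (simp add: Vset_def vadd_def)

lemma Vset_smul: "u \<in> Vset m n k \<Longrightarrow> vsmul a u \<in> Vset m n k"
  by (simp add: Vset_def vsmul_def)

lemma Vset_A: "u \<in> Vset m n k \<Longrightarrow> actA q m n d l u \<in> Vset m n k"
  by (simp add: Vset_def actA_coord)

lemma vld_shift1: "\<not> vld m n k i j \<Longrightarrow> 0 < j \<Longrightarrow> i < m \<Longrightarrow> j \<le> n \<Longrightarrow> \<not> vld m n k (i+1) (j-1)"
  by (auto simp: vld_def)

lemma Vset_C: "u \<in> Vset m n k \<Longrightarrow> actC q m n d l u \<in> Vset m n k"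
  unfolding Vset_def
proof (intro CollectI allI impI)
  fix i j assume u: "u \<in> {c. \<forall>i j. \<not> vld m n k i j \<longrightarrow> c i j = 0}" and nv: "\<not> vld m n k i j"
  have 1: "cM q m n d l i j * u (i+1) (j-1) = 0"
    using u nv by (auto simp: cM_def vld_def)
  have 2: "u i j = 0" using u nv by simp
  show "actC q m n d l u i j = 0" by (simp only: actC_coord 1 2 mult_zero_right add_0)
qed

lemma Vset_B: "u \<in> Vset m n k \<Longrightarrow> actB q m n d l u \<in> Vset m n k"
  unfolding Vset_def
proof (intro CollectI allI impI)
  fix i j assume u: "u \<in> {c. \<forall>i j. \<not> vld m n k i j \<longrightarrow> c i j = 0}" and nv: "\<not> vld m n k i j"
  have 1: "bM q m n d l i j * u (i+1) (j-1) = 0"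
    using u nv by (auto simp: bM_def vld_def)
  have 3: "bP q m n d l i j * u (i-1) (j+1) = 0"
    using u nv by (auto simp: bP_def vld_def)
  have 2: "u i j = 0" using u nv by simp
  show "actB q m n d l u i j = 0" by (simp only: actB_coord 1 2 3 mult_zero_right add_0)
qed



lemma cM_j0[simp]: "cM q m n d l i 0 = 0" by (simp add: cM_def)
lemma bM_j0[simp]: "bM q m n d l i 0 = 0" by (simp add: bM_def)
lemma bP_i0[simp]: "bP q m n d l 0 j = 0" by (simp add: bP_def)

definition fmap :: "nat \<Rightarrow> nat \<Rightarrow> nat \<Rightarrow> nat \<Rightarrow> (nat \<Rightarrow> nat) \<Rightarrow> (nat \<Rightarrow> complex) \<Rightarrow> vec \<Rightarrow> vec" where
  "fmap k m' n' k' hinv \<alpha> c = (\<lambda>i' j'. if vld m' n' k' i' j' then \<alpha> j' * c (k - hinv j') (hinv j') else 0)"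

lemma fmap_Vset: "fmap k m' n' k' hinv \<alpha> c \<in> Vset m' n' k'"
  by (simp add: fmap_def Vset_def)

lemma gen_iso:
  fixes q :: complex and m n k m' n' k' :: nat and d l d' l' :: complex
    and h hinv :: "nat \<Rightarrow> nat" and \<alpha> :: "nat \<Rightarrow> complex"
  assumes q: "qok q" and d: "d \<in> {1,-1}" and d': "d' \<in> {1,-1}" and l: "l \<noteq> 0" and l': "l' \<noteq> 0"
  and HW: "\<And>i' j'. vld m' n' k' i' j' \<Longrightarrow> vld m n k (k - hinv j') (hinv j') \<and> h (hinv j') = j' \<and> \<alpha> j' \<noteq> 0"
  and HV: "\<And>i j. vld m n k i j \<Longrightarrow> vld m' n' k' (k' - h j) (h j) \<and> hinv (h j) = j"
  and HA: "\<And>i' j'. vld m' n' k' i' j' \<Longrightarrow> aD q m n d l (k - hinv j') (hinv j') = aD q m' n' d' l' i' j'"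
  and HCD: "\<And>i' j'. vld m' n' k' i' j' \<Longrightarrow> cD q m n d l (k - hinv j') (hinv j') = cD q m' n' d' l' i' j'"
  and HBD: "\<And>i' j'. vld m' n' k' i' j' \<Longrightarrow> bD q m n d l (k - hinv j') (hinv j') = bD q m' n' d' l' i' j'"
  and HCM: "\<And>i' j'. vld m' n' k' i' j' \<Longrightarrow>
     ((0 < hinv j' \<and> vld m n k (k - hinv j' + 1) (hinv j' - 1)) \<longleftrightarrow> (0 < j' \<and> vld m' n' k' (i'+1) (j'-1)))
     \<and> (0 < hinv j' \<and> vld m n k (k - hinv j' + 1) (hinv j' - 1) \<longrightarrow> hinv (j' - 1) = hinv j' - 1 \<and>
          \<alpha> j' * cM q m n d l (k - hinv j') (hinv j') = cM q m' n' d' l' i' j' * \<alpha> (j'-1))"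
  and HBM: "\<And>i' j'. vld m' n' k' i' j' \<Longrightarrow>
     ((0 < hinv j' \<and> vld m n k (k - hinv j' + 1) (hinv j' - 1)) \<longleftrightarrow> (0 < j' \<and> vld m' n' k' (i'+1) (j'-1)))
     \<and> (0 < hinv j' \<and> vld m n k (k - hinv j' + 1) (hinv j' - 1) \<longrightarrow> hinv (j' - 1) = hinv j' - 1 \<and>
          \<alpha> j' * bM q m n d l (k - hinv j') (hinv j') = bM q m' n' d' l' i' j' * \<alpha> (j'-1))"
  and HBP: "\<And>i' j'. vld m' n' k' i' j' \<Longrightarrow>
     ((0 < k - hinv j' \<and> vld m n k (k - hinv j' - 1) (hinv j' + 1)) \<longleftrightarrow> (0 < i' \<and> vld m' n' k' (i'-1) (j'+1)))
     \<and> (0 < k - hinv j' \<and> vld m n k (k - hinv j' - 1) (hinv j' + 1) \<longrightarrow> hinv (j' + 1) = hinv j' + 1 \<and>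
          \<alpha> j' * bP q m n d l (k - hinv j') (hinv j') = bP q m' n' d' l' i' j' * \<alpha> (j'+1))"
  shows "Hq_iso q m n d l (d * q powi (int m + int n - 2 * int k)) m' n' d' l' (d' * q powi (int m' + int n' - 2 * int k'))"
proof -
  let ?V = "Vset m n k" and ?W = "Vset m' n' k'"
  let ?f = "fmap k m' n' k' hinv \<alpha>"
  have fval: "?f c i' j' = (if vld m' n' k' i' j' then \<alpha> j' * c (k - hinv j') (hinv j') else 0)" for c i' j'
    by (simp add: fmap_def)
  have ij: "k - hinv j' + hinv j' = k" "hinv j' \<le> k" if "vld m' n' k' i' j'" for i' j'
    using HW[OF that] by (auto simp: vld_def)
  have inj: "inj_on ?f ?V"
  proof (rule inj_onI)
    fix u w assume u: "u \<in> ?V" and w: "w \<in> ?V" and e: "?f u = ?f w"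
    show "u = w"
    proof (rule ext, rule ext)
      fix i j
      show "u i j = w i j"
      proof (cases "vld m n k i j")
        case True
        from HV[OF True] have v': "vld m' n' k' (k' - h j) (h j)" and hh: "hinv (h j) = j" by auto
        have a0: "\<alpha> (h j) \<noteq> 0" using HW[OF v'] by simp
        have ki: "k - j = i" using True by (auto simp: vld_def)
        have "?f u (k' - h j) (h j) = ?f w (k' - h j) (h j)" using e by simp
        then have "\<alpha> (h j) * u i j = \<alpha> (h j) * w i j" using v' hh ki by (simp add: fval)
        thus ?thesis using a0 by simp
      next
        case False
        thus ?thesis using u w by (simp add: Vset_def)
      qed
    qed
  qed
  have surj: "?f ` ?V = ?W"
  proof
    show "?f ` ?V \<subseteq> ?W" using fmap_Vset by blast
  next
    show "?W \<subseteq> ?f ` ?V"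
    proof
      fix w assume w: "w \<in> ?W"
      define c where "c = (\<lambda>i j. if vld m n k i j then w (k' - h j) (h j) / \<alpha> (h j) else 0)"
      have cV: "c \<in> ?V" by (simp add: c_def Vset_def)
      have "?f c = w"
      proof (rule ext, rule ext)
        fix i' j'
        show "?f c i' j' = w i' j'"
        proof (cases "vld m' n' k' i' j'")
          case True
          from HW[OF True] have hv: "vld m n k (k - hinv j') (hinv j')" and hh: "h (hinv j') = j'"
            and a0: "\<alpha> j' \<noteq> 0" by auto
          have "k' - j' = i'" using True by (auto simp: vld_def)
          thus ?thesis using True hv hh a0 by (simp add: fval c_def)
        next
          case False
          thus ?thesis using w by (simp add: fval Vset_def)
        qed
      qed
      thus "w \<in> ?f ` ?V" using cV by blast
    qed
  qed
  have bij: "bij_betw ?f ?V ?W" using inj surj by (simp add: bij_betw_def)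
  have lin1: "?f (vadd u w) = vadd (?f u) (?f w)" for u w
    by (auto simp: fun_eq_iff fmap_def vadd_def algebra_simps)
  have lin2: "?f (vsmul a u) = vsmul a (?f u)" for a u
    by (auto simp: fun_eq_iff fmap_def vsmul_def algebra_simps)
  have iA: "?f (actA q m n d l u) = actA q m' n' d' l' (?f u)" for u
  proof (rule ext, rule ext)
    fix i' j'
    show "?f (actA q m n d l u) i' j' = actA q m' n' d' l' (?f u) i' j'"
      using HA[of i' j'] by (cases "vld m' n' k' i' j'") (simp_all add: fval actA_coord)
  qed
  have iC: "?f (actC q m n d l u) = actC q m' n' d' l' (?f u)" if u: "u \<in> ?V" for u
  proof (rule ext, rule ext)
    fix i' j'
    show "?f (actC q m n d l u) i' j' = actC q m' n' d' l' (?f u) i' j'"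
    proof (cases "vld m' n' k' i' j'")
      case False
      have "actC q m' n' d' l' (?f u) \<in> ?W" by (rule Vset_C[OF fmap_Vset])
      then have "actC q m' n' d' l' (?f u) i' j' = 0" using False by (simp add: Vset_def)
      thus ?thesis using False by (simp add: fval)
    next
      case True
      let ?j = "hinv j'" let ?i = "k - hinv j'"
      have T1: "\<alpha> j' * (cD q m n d l ?i ?j * u ?i ?j) = cD q m' n' d' l' i' j' * ?f u i' j'"
        using HCD[OF True] True by (simp add: fval)
      have T2: "\<alpha> j' * (cM q m n d l ?i ?j * u (?i+1) (?j-1)) = cM q m' n' d' l' i' j' * ?f u (i'+1) (j'-1)"
      proof (cases "0 < ?j \<and> vld m n k (?i+1) (?j-1)")
        case True2: True
        have c: "hinv (j' - 1) = ?j - 1" "\<alpha> j' * cM q m n d l ?i ?j = cM q m' n' d' l' i' j' * \<alpha> (j'-1)"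
          and v: "vld m' n' k' (i'+1) (j'-1)"
          using HCM[OF True] True2 by auto
        have kk: "k - (?j - 1) = ?i + 1" using ij[OF True] True2 by simp
        show ?thesis using c v kk by (simp add: fval)
      next
        case False2: False
        then have nv: "\<not> (0 < j' \<and> vld m' n' k' (i'+1) (j'-1))" using HCM[OF True] by blast
        have L: "cM q m n d l ?i ?j * u (?i+1) (?j-1) = 0"
          using False2 u by (cases "?j = 0") (auto simp: Vset_def)
        have R: "cM q m' n' d' l' i' j' * ?f u (i'+1) (j'-1) = 0"
          using nv by (cases "j' = 0") (auto simp: fval)
        show ?thesis unfolding L R by simp
      qed
      have "?f (actC q m n d l u) i' j' = \<alpha> j' * (cD q m n d l ?i ?j * u ?i ?j + cM q m n d l ?i ?j * u (?i+1) (?j-1))"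
        using True by (simp add: fval actC_coord)
      also have "\<dots> = cD q m' n' d' l' i' j' * ?f u i' j' + cM q m' n' d' l' i' j' * ?f u (i'+1) (j'-1)"
        using T1 T2 by (simp add: distrib_left)
      also have "\<dots> = actC q m' n' d' l' (?f u) i' j'" by (simp add: actC_coord)
      finally show ?thesis .
    qed
  qed
  have iB: "?f (actB q m n d l u) = actB q m' n' d' l' (?f u)" if u: "u \<in> ?V" for u
  proof (rule ext, rule ext)
    fix i' j'
    show "?f (actB q m n d l u) i' j' = actB q m' n' d' l' (?f u) i' j'"
    proof (cases "vld m' n' k' i' j'")
      case False
      have "actB q m' n' d' l' (?f u) \<in> ?W" by (rule Vset_B[OF fmap_Vset])
      then have "actB q m' n' d' l' (?f u) i' j' = 0" using False by (simp add: Vset_def)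
      thus ?thesis using False by (simp add: fval)
    next
      case True
      let ?j = "hinv j'" let ?i = "k - hinv j'"
      have T1: "\<alpha> j' * (bD q m n d l ?i ?j * u ?i ?j) = bD q m' n' d' l' i' j' * ?f u i' j'"
        using HBD[OF True] True by (simp add: fval)
      have T2: "\<alpha> j' * (bM q m n d l ?i ?j * u (?i+1) (?j-1)) = bM q m' n' d' l' i' j' * ?f u (i'+1) (j'-1)"
      proof (cases "0 < ?j \<and> vld m n k (?i+1) (?j-1)")
        case True2: True
        have c: "hinv (j' - 1) = ?j - 1" "\<alpha> j' * bM q m n d l ?i ?j = bM q m' n' d' l' i' j' * \<alpha> (j'-1)"
          and v: "vld m' n' k' (i'+1) (j'-1)"
          using HBM[OF True] True2 by auto
        have kk: "k - (?j - 1) = ?i + 1" using ij[OF True] True2 by simp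
        show ?thesis using c v kk by (simp add: fval)
      next
        case False2: False
        then have nv: "\<not> (0 < j' \<and> vld m' n' k' (i'+1) (j'-1))" using HBM[OF True] by blast
        have L: "bM q m n d l ?i ?j * u (?i+1) (?j-1) = 0"
          using False2 u by (cases "?j = 0") (auto simp: Vset_def)
        have R: "bM q m' n' d' l' i' j' * ?f u (i'+1) (j'-1) = 0"
          using nv by (cases "j' = 0") (auto simp: fval)
        show ?thesis unfolding L R by simp
      qed
      have T3: "\<alpha> j' * (bP q m n d l ?i ?j * u (?i-1) (?j+1)) = bP q m' n' d' l' i' j' * ?f u (i'-1) (j'+1)"
      proof (cases "0 < ?i \<and> vld m n k (?i-1) (?j+1)")
        case True2: True
        have c: "hinv (j' + 1) = ?j + 1" "\<alpha> j' * bP q m n d l ?i ?j = bP q m' n' d' l' i' j' * \<alpha> (j'+1)"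
          and v: "vld m' n' k' (i'-1) (j'+1)"
          using HBP[OF True] True2 by auto
        have kk: "k - (?j + 1) = ?i - 1" by simp
        show ?thesis using c v kk by (simp add: fval)
      next
        case False2: False
        then have nv: "\<not> (0 < i' \<and> vld m' n' k' (i'-1) (j'+1))" using HBP[OF True] by blast
        have L: "bP q m n d l ?i ?j * u (?i-1) (?j+1) = 0"
          using False2 u by (cases "?i = 0") (auto simp: Vset_def)
        have R: "bP q m' n' d' l' i' j' * ?f u (i'-1) (j'+1) = 0"
          using nv by (cases "i' = 0") (auto simp: fval)
        show ?thesis unfolding L R by simp
      qed
      have "?f (actB q m n d l u) i' j' = \<alpha> j' * (bD q m n d l ?i ?j * u ?i ?j + bM q m n d l ?i ?j * u (?i+1) (?j-1)
              + bP q m n d l ?i ?j * u (?i-1) (?j+1))"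
        using True by (simp add: fval actB_coord)
      also have "\<dots> = bD q m' n' d' l' i' j' * ?f u i' j' + bM q m' n' d' l' i' j' * ?f u (i'+1) (j'-1)
              + bP q m' n' d' l' i' j' * ?f u (i'-1) (j'+1)"
        using T1 T2 T3 by (simp add: distrib_left)
      also have "\<dots> = actB q m' n' d' l' (?f u) i' j'" by (simp add: actB_coord)
      finally show ?thesis .
    qed
  qed
  show ?thesis
    unfolding Hq_iso_def Let_def eig_Vset[OF q d l] eig_Vset[OF q d' l']
    using bij lin1 lin2 iA iB iC by blast
qed



definition qfact :: "complex \<Rightarrow> nat \<Rightarrow> complex" where
  "qfact q r = (\<Prod>t<r. qnum q (Suc t))"

lemma qfact_Suc: "qfact q (Suc r) = qfact q r * qnum q (Suc r)"
  by (simp add: qfact_def)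

lemma qfact_nz: "qok q \<Longrightarrow> qfact q r \<noteq> 0"
  by (auto simp: qfact_def qnum_nz)

lemma powi_x2: "(q::complex) powi (x * 2) = (q powi x)^2"
  by (metis power_int_power' of_nat_numeral)

lemmas psplit = power_int_add power_int_diff power_int_minus powi_x2 of_nat_add of_nat_Suc



lemma qnum_alt: "qok q \<Longrightarrow> qnum q t = (q^t - inverse q ^ t) / (q - inverse q)"
  by (simp add: qnum_def)

lemma bD_closed:
  fixes q l d :: complex and m n i j :: nat
  assumes q: "qok q" and l: "l \<noteq> 0" and d: "d \<in> {1,-1}" and im: "i \<le> m" and jn: "j \<le> n"
  shows "bD q m n d l i j = d * (q powi (int m + int n + 1 - 2*int j) + q powi (int n - int m - 1 - 2*int j)
     + q powi (int n - int m + 1 + 2*int i) + q powi (2*int i - int m - int n - 1)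
     - q powi (int n - int m + 2*int i - 2*int j + 1) - q powi (int n - int m + 2*int i - 2*int j - 1))"
proof -
  have q0: "q \<noteq> 0" using qok_nz[OF q] .
  have qm: "q - inverse q \<noteq> 0" using qmi_nz[OF q] .
  have dd: "inverse d = d" using d by auto
  have d0: "d \<noteq> 0" using d by auto
  have e1: "(q - inverse q) * qnum q z = q^z - inverse q^z" for z using qm by (simp add: qnum_def)
  let ?X = "d * inverse l * q powi (int n - 2*int j)"
  let ?Y = "inverse (l * q powi (int m - 2*int i))"
  let ?Z = "inverse q * (l * q powi (int m - 2*int i) * (d * inverse l * q powi (int n - 2*int j)))
     + q * (inverse (l * q powi (int m - 2*int i)) * inverse (d * inverse l * q powi (int n - 2*int j)))"
  have g1: "(if i < m then l * qnum q (i+1) * qnum q (m-i) * ?X else 0) = l * qnum q (i+1) * qnum q (m-i) * ?X"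
    using im by (cases "i < m") auto
  have g2: "(if j < n then ?Y * (d * l * qnum q (j+1) * qnum q (n-j)) else 0) = ?Y * (d * l * qnum q (j+1) * qnum q (n-j))"
    using jn by (cases "j < n") auto
  have "bD q m n d l i j = (q - inverse q)^2 * (l * qnum q (i+1) * qnum q (m-i) * ?X + ?Y * (d * l * qnum q (j+1) * qnum q (n-j))) + ?Z"
    unfolding bD_def g1 g2 by simp
  also have "\<dots> = l * ?X * ((q - inverse q) * qnum q (i+1)) * ((q - inverse q) * qnum q (m-i))
     + ?Y * d * l * ((q - inverse q) * qnum q (j+1)) * ((q - inverse q) * qnum q (n-j)) + ?Z"
    by (simp add: power2_eq_square algebra_simps)
  also have "\<dots> = l * ?X * (q^(i+1) - inverse q^(i+1)) * (q^(m-i) - inverse q^(m-i))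
     + ?Y * d * l * (q^(j+1) - inverse q^(j+1)) * (q^(n-j) - inverse q^(n-j)) + ?Z"
    by (simp only: e1)
  finally have bd: "bD q m n d l i j = l * ?X * (q^(i+1) - inverse q^(i+1)) * (q^(m-i) - inverse q^(m-i))
     + ?Y * d * l * (q^(j+1) - inverse q^(j+1)) * (q^(n-j) - inverse q^(n-j)) + ?Z" .
  define a b where "a = m - i" and "b = n - j"
  have s: "m = i + a" "n = j + b" using im jn by (auto simp: a_def b_def)
  show ?thesis
    unfolding bd unfolding s
    using q0 l d
    by (auto simp: psplit field_simps power2_eq_square)
qed



lemma iso2:
  fixes q l d :: complex and m n k :: nat
  assumes q: "qok q" and l: "l \<noteq> 0" and d: "d \<in> {1,-1}" and km: "k \<le> m + n"
  shows "Hq_iso q m n d l (d * q powi (int m + int n - 2 * int k))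
           (m + n - k) k d (l * q powi (int k - int n)) (d * q powi (int (m + n - k) + int k - 2 * int n))"
proof -
  have q0: "q \<noteq> 0" using qok_nz[OF q] .
  have qm: "q - inverse q \<noteq> 0" using qmi_nz[OF q] .
  have l': "l * q powi (int k - int n) \<noteq> 0" using l q0 by simp
  define \<alpha> where "\<alpha> = (\<lambda>j. (q powi (int k - int n))^j * qfact q (k - j) / qfact q (n - j))"
  let ?m' = "m + n - k" let ?l' = "l * q powi (int k - int n)"
  show ?thesis
  proof (rule gen_iso[where h = id and hinv = id and \<alpha> = \<alpha>, OF q d d l l'])
    fix i' j' assume v: "vld ?m' k n i' j'"
    show "vld m n k (k - id j') (id j') \<and> id (id j') = j' \<and> \<alpha> j' \<noteq> 0"
      using v km q0 qfact_nz[OF q] by (auto simp: vld_def \<alpha>_def)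
  next
    fix i j assume v: "vld m n k i j"
    show "vld ?m' k n (n - id j) (id j) \<and> id (id j) = j" using v km by (auto simp: vld_def)
  next
    fix i' j' assume v: "vld ?m' k n i' j'"
    define a b c where "a = k - j'" and "b = n - j'" and "c = m - (k - j')"
    have s: "k = j' + a" "n = j' + b" "m = a + c" "i' = b" using v km by (auto simp: vld_def a_def b_def c_def)
    show "aD q m n d l (k - id j') (id j') = aD q ?m' k d ?l' i' j'"
      unfolding aD_def id_def s using q0 l d by (auto simp: psplit field_simps)
  next
    fix i' j' assume v: "vld ?m' k n i' j'"
    define a b c where "a = k - j'" and "b = n - j'" and "c = m - (k - j')"
    have s: "k = j' + a" "n = j' + b" "m = a + c" "i' = b" using v km by (auto simp: vld_def a_def b_def c_def)
    show "cD q m n d l (k - id j') (id j') = cD q ?m' k d ?l' i' j'"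
      unfolding cD_def id_def s using q0 l d by (auto simp: psplit field_simps power2_eq_square)
  next
    fix i' j' assume v: "vld ?m' k n i' j'"
    define a b c where "a = k - j'" and "b = n - j'" and "c = m - (k - j')"
    have s: "k = j' + a" "n = j' + b" "m = a + c" "i' = b" using v km by (auto simp: vld_def a_def b_def c_def)
    have v1: "k - j' \<le> m" "j' \<le> n" "i' \<le> ?m'" "j' \<le> k" using v km by (auto simp: vld_def)
    show "bD q m n d l (k - id j') (id j') = bD q ?m' k d ?l' i' j'"
      unfolding id_def bD_closed[OF q l d v1(1,2)] bD_closed[OF q l' d v1(3,4)]
      unfolding s using q0 l d by (auto simp: psplit field_simps)
  next
    fix i' j' assume v: "vld ?m' k n i' j'"
    show "((0 < id j' \<and> vld m n k (k - id j' + 1) (id j' - 1)) \<longleftrightarrow> (0 < j' \<and> vld ?m' k n (i'+1) (j'-1)))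
     \<and> (0 < id j' \<and> vld m n k (k - id j' + 1) (id j' - 1) \<longrightarrow> id (j' - 1) = id j' - 1 \<and>
          \<alpha> j' * cM q m n d l (k - id j') (id j') = cM q ?m' k d ?l' i' j' * \<alpha> (j'-1))"
    proof (intro conjI impI)
      show "(0 < id j' \<and> vld m n k (k - id j' + 1) (id j' - 1)) \<longleftrightarrow> (0 < j' \<and> vld ?m' k n (i'+1) (j'-1))"
        using v km by (auto simp: vld_def)
      assume h: "0 < id j' \<and> vld m n k (k - id j' + 1) (id j' - 1)"
      show "id (j' - 1) = id j' - 1" by simp
      define j0 a b c0 where "j0 = j' - 1" and "a = k - j'" and "b = n - j'" and "c0 = m - (k - j') - 1"
      have s: "j' = Suc j0" "k = Suc j0 + a" "n = Suc j0 + b" "m = a + Suc c0" "i' = b"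
        using v h km by (auto simp: vld_def a_def b_def c0_def j0_def)
      have fa: "qfact q a \<noteq> 0" "qfact q b \<noteq> 0" "qnum q (Suc a) \<noteq> 0" "qnum q (Suc b) \<noteq> 0"
        using qfact_nz[OF q] qnum_nz[OF q] by auto
      show "\<alpha> j' * cM q m n d l (k - id j') (id j') = cM q ?m' k d ?l' i' j' * \<alpha> (j'-1)"
        unfolding \<alpha>_def cM_def id_def s using fa q0 l d
        by (auto simp: psplit qfact_Suc field_simps)
    qed
  next
    fix i' j' assume v: "vld ?m' k n i' j'"
    show "((0 < id j' \<and> vld m n k (k - id j' + 1) (id j' - 1)) \<longleftrightarrow> (0 < j' \<and> vld ?m' k n (i'+1) (j'-1)))
     \<and> (0 < id j' \<and> vld m n k (k - id j' + 1) (id j' - 1) \<longrightarrow> id (j' - 1) = id j' - 1 \<and>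
          \<alpha> j' * bM q m n d l (k - id j') (id j') = bM q ?m' k d ?l' i' j' * \<alpha> (j'-1))"
    proof (intro conjI impI)
      show "(0 < id j' \<and> vld m n k (k - id j' + 1) (id j' - 1)) \<longleftrightarrow> (0 < j' \<and> vld ?m' k n (i'+1) (j'-1))"
        using v km by (auto simp: vld_def)
      assume h: "0 < id j' \<and> vld m n k (k - id j' + 1) (id j' - 1)"
      show "id (j' - 1) = id j' - 1" by simp
      define j0 a b c0 where "j0 = j' - 1" and "a = k - j'" and "b = n - j'" and "c0 = m - (k - j') - 1"
      have s: "j' = Suc j0" "k = Suc j0 + a" "n = Suc j0 + b" "m = a + Suc c0" "i' = b"
        using v h km by (auto simp: vld_def a_def b_def c0_def j0_def)
      have fa: "qfact q a \<noteq> 0" "qfact q b \<noteq> 0" "qnum q (Suc a) \<noteq> 0" "qnum q (Suc b) \<noteq> 0"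
        using qfact_nz[OF q] qnum_nz[OF q] by auto
      show "\<alpha> j' * bM q m n d l (k - id j') (id j') = bM q ?m' k d ?l' i' j' * \<alpha> (j'-1)"
        unfolding \<alpha>_def bM_def id_def s using fa q0 l d
        by (auto simp: psplit qfact_Suc field_simps)
    qed
  next
    fix i' j' assume v: "vld ?m' k n i' j'"
    show "((0 < k - id j' \<and> vld m n k (k - id j' - 1) (id j' + 1)) \<longleftrightarrow> (0 < i' \<and> vld ?m' k n (i'-1) (j'+1)))
     \<and> (0 < k - id j' \<and> vld m n k (k - id j' - 1) (id j' + 1) \<longrightarrow> id (j' + 1) = id j' + 1 \<and>
          \<alpha> j' * bP q m n d l (k - id j') (id j') = bP q ?m' k d ?l' i' j' * \<alpha> (j'+1))"
    proof (intro conjI impI)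
      show "(0 < k - id j' \<and> vld m n k (k - id j' - 1) (id j' + 1)) \<longleftrightarrow> (0 < i' \<and> vld ?m' k n (i'-1) (j'+1))"
        using v km by (auto simp: vld_def)
      assume h: "0 < k - id j' \<and> vld m n k (k - id j' - 1) (id j' + 1)"
      show "id (j' + 1) = id j' + 1" by simp
      define a0 b0 c where "a0 = k - j' - 1" and "b0 = n - j' - 1" and "c = m - (k - j')"
      have s: "k = j' + Suc a0" "n = j' + Suc b0" "m = Suc a0 + c" "i' = Suc b0"
        using v h km by (auto simp: vld_def a0_def b0_def c_def)
      have fa: "qfact q a0 \<noteq> 0" "qfact q b0 \<noteq> 0" "qnum q (Suc a0) \<noteq> 0" "qnum q (Suc b0) \<noteq> 0"
        using qfact_nz[OF q] qnum_nz[OF q] by auto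
      show "\<alpha> j' * bP q m n d l (k - id j') (id j') = bP q ?m' k d ?l' i' j' * \<alpha> (j'+1)"
        unfolding \<alpha>_def bP_def id_def s using fa q0 l d
        by (auto simp: psplit qfact_Suc field_simps)
    qed
  qed
qed



lemma iso3:
  fixes q l d :: complex and m n k :: nat
  assumes q: "qok q" and l: "l \<noteq> 0" and d: "d \<in> {1,-1}" and km: "k \<le> m + n"
  shows "Hq_iso q m n d l (d * q powi (int m + int n - 2 * int k))
           k (m + n - k) d (l * q powi (int k - int m)) (d * q powi (int k + int (m + n - k) - 2 * int m))"
proof -
  have q0: "q \<noteq> 0" using qok_nz[OF q] .
  have qm: "q - inverse q \<noteq> 0" using qmi_nz[OF q] .
  have l': "l * q powi (int k - int m) \<noteq> 0" using l q0 by simp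
  define hv where "hv = (\<lambda>j'. j' + k - m)"
  define hw where "hw = (\<lambda>j. j + m - k)"
  define \<alpha> where "\<alpha> = (\<lambda>j'. (q powi (int k - int m))^j' * qfact q (hv j') / qfact q j')"
  let ?n' = "m + n - k" let ?l' = "l * q powi (int k - int m)"
  show ?thesis
  proof (rule gen_iso[where h = hw and hinv = hv and \<alpha> = \<alpha>, OF q d d l l'])
    fix i' j' assume v: "vld k ?n' m i' j'"
    show "vld m n k (k - hv j') (hv j') \<and> hw (hv j') = j' \<and> \<alpha> j' \<noteq> 0"
      using v km q0 qfact_nz[OF q] by (auto simp: vld_def \<alpha>_def hv_def hw_def)
  next
    fix i j assume v: "vld m n k i j"
    show "vld k ?n' m (m - hw j) (hw j) \<and> hv (hw j) = j" using v km by (auto simp: vld_def hv_def hw_def)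
  next
    fix i' j' assume v: "vld k ?n' m i' j'"
    define p r t where "p = m - i'" and "r = k - i'" and "t = n - (k - i')"
    have s: "m = i' + p" "k = i' + r" "n = r + t" "j' = p" using v km by (auto simp: vld_def p_def r_def t_def)
    show "aD q m n d l (k - hv j') (hv j') = aD q k ?n' d ?l' i' j'"
      unfolding aD_def hv_def s using q0 l d by (auto simp: psplit field_simps)
  next
    fix i' j' assume v: "vld k ?n' m i' j'"
    define p r t where "p = m - i'" and "r = k - i'" and "t = n - (k - i')"
    have s: "m = i' + p" "k = i' + r" "n = r + t" "j' = p" using v km by (auto simp: vld_def p_def r_def t_def)
    show "cD q m n d l (k - hv j') (hv j') = cD q k ?n' d ?l' i' j'"
      unfolding cD_def hv_def s using q0 l d by (auto simp: psplit field_simps power2_eq_square)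
  next
    fix i' j' assume v: "vld k ?n' m i' j'"
    define p r t where "p = m - i'" and "r = k - i'" and "t = n - (k - i')"
    have s: "m = i' + p" "k = i' + r" "n = r + t" "j' = p" using v km by (auto simp: vld_def p_def r_def t_def)
    have v1: "k - hv j' \<le> m" "hv j' \<le> n" "i' \<le> k" "j' \<le> ?n'" using v km by (auto simp: vld_def hv_def)
    show "bD q m n d l (k - hv j') (hv j') = bD q k ?n' d ?l' i' j'"
      unfolding bD_closed[OF q l d v1(1,2)] bD_closed[OF q l' d v1(3,4)]
      unfolding hv_def s using q0 l d by (auto simp: psplit field_simps)
  next
    fix i' j' assume v: "vld k ?n' m i' j'"
    show "((0 < hv j' \<and> vld m n k (k - hv j' + 1) (hv j' - 1)) \<longleftrightarrow> (0 < j' \<and> vld k ?n' m (i'+1) (j'-1)))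
     \<and> (0 < hv j' \<and> vld m n k (k - hv j' + 1) (hv j' - 1) \<longrightarrow> hv (j' - 1) = hv j' - 1 \<and>
          \<alpha> j' * cM q m n d l (k - hv j') (hv j') = cM q k ?n' d ?l' i' j' * \<alpha> (j'-1))"
    proof (intro conjI impI)
      show "(0 < hv j' \<and> vld m n k (k - hv j' + 1) (hv j' - 1)) \<longleftrightarrow> (0 < j' \<and> vld k ?n' m (i'+1) (j'-1))"
        using v km by (auto simp: vld_def hv_def)
      assume h: "0 < hv j' \<and> vld m n k (k - hv j' + 1) (hv j' - 1)"
      define p0 r0 t where "p0 = m - i' - 1" and "r0 = k - i' - 1" and "t = n - (k - i')"
      have s: "m = i' + Suc p0" "k = i' + Suc r0" "n = Suc r0 + t" "j' = Suc p0"
        using v h km by (auto simp: vld_def hv_def p0_def r0_def t_def)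
      show "hv (j' - 1) = hv j' - 1" unfolding hv_def s by simp
      have fa: "qfact q p0 \<noteq> 0" "qfact q r0 \<noteq> 0" "qnum q (Suc p0) \<noteq> 0" "qnum q (Suc r0) \<noteq> 0"
        using qfact_nz[OF q] qnum_nz[OF q] by auto
      show "\<alpha> j' * cM q m n d l (k - hv j') (hv j') = cM q k ?n' d ?l' i' j' * \<alpha> (j'-1)"
        unfolding \<alpha>_def cM_def hv_def s using fa q0 l d
        by (auto simp: psplit qfact_Suc field_simps)
    qed
  next
    fix i' j' assume v: "vld k ?n' m i' j'"
    show "((0 < hv j' \<and> vld m n k (k - hv j' + 1) (hv j' - 1)) \<longleftrightarrow> (0 < j' \<and> vld k ?n' m (i'+1) (j'-1)))
     \<and> (0 < hv j' \<and> vld m n k (k - hv j' + 1) (hv j' - 1) \<longrightarrow> hv (j' - 1) = hv j' - 1 \<and>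
          \<alpha> j' * bM q m n d l (k - hv j') (hv j') = bM q k ?n' d ?l' i' j' * \<alpha> (j'-1))"
    proof (intro conjI impI)
      show "(0 < hv j' \<and> vld m n k (k - hv j' + 1) (hv j' - 1)) \<longleftrightarrow> (0 < j' \<and> vld k ?n' m (i'+1) (j'-1))"
        using v km by (auto simp: vld_def hv_def)
      assume h: "0 < hv j' \<and> vld m n k (k - hv j' + 1) (hv j' - 1)"
      define p0 r0 t where "p0 = m - i' - 1" and "r0 = k - i' - 1" and "t = n - (k - i')"
      have s: "m = i' + Suc p0" "k = i' + Suc r0" "n = Suc r0 + t" "j' = Suc p0"
        using v h km by (auto simp: vld_def hv_def p0_def r0_def t_def)
      show "hv (j' - 1) = hv j' - 1" unfolding hv_def s by simp
      have fa: "qfact q p0 \<noteq> 0" "qfact q r0 \<noteq> 0" "qnum q (Suc p0) \<noteq> 0" "qnum q (Suc r0) \<noteq> 0"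
        using qfact_nz[OF q] qnum_nz[OF q] by auto
      show "\<alpha> j' * bM q m n d l (k - hv j') (hv j') = bM q k ?n' d ?l' i' j' * \<alpha> (j'-1)"
        unfolding \<alpha>_def bM_def hv_def s using fa q0 l d
        by (auto simp: psplit qfact_Suc field_simps)
    qed
  next
    fix i' j' assume v: "vld k ?n' m i' j'"
    show "((0 < k - hv j' \<and> vld m n k (k - hv j' - 1) (hv j' + 1)) \<longleftrightarrow> (0 < i' \<and> vld k ?n' m (i'-1) (j'+1)))
     \<and> (0 < k - hv j' \<and> vld m n k (k - hv j' - 1) (hv j' + 1) \<longrightarrow> hv (j' + 1) = hv j' + 1 \<and>
          \<alpha> j' * bP q m n d l (k - hv j') (hv j') = bP q k ?n' d ?l' i' j' * \<alpha> (j'+1))"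
    proof (intro conjI impI)
      show "(0 < k - hv j' \<and> vld m n k (k - hv j' - 1) (hv j' + 1)) \<longleftrightarrow> (0 < i' \<and> vld k ?n' m (i'-1) (j'+1))"
        using v km by (auto simp: vld_def hv_def)
      assume h: "0 < k - hv j' \<and> vld m n k (k - hv j' - 1) (hv j' + 1)"
      define i0 p r t0 where "i0 = i' - 1" and "p = m - i'" and "r = k - i'" and "t0 = n - (k - i') - 1"
      have s: "m = Suc i0 + p" "k = Suc i0 + r" "n = r + Suc t0" "j' = p" "i' = Suc i0"
        using v h km by (auto simp: vld_def hv_def p_def r_def t0_def i0_def)
      show "hv (j' + 1) = hv j' + 1" unfolding hv_def s by simp
      have fa: "qfact q p \<noteq> 0" "qfact q r \<noteq> 0" "qnum q (Suc p) \<noteq> 0" "qnum q (Suc r) \<noteq> 0"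
        using qfact_nz[OF q] qnum_nz[OF q] by auto
      show "\<alpha> j' * bP q m n d l (k - hv j') (hv j') = bP q k ?n' d ?l' i' j' * \<alpha> (j'+1)"
        unfolding \<alpha>_def bP_def hv_def s using fa q0 l d
        by (auto simp: psplit qfact_Suc field_simps)
    qed
  qed
qed



lemma iso_refl: "Hq_iso q m n d l \<theta> m n d l \<theta>"
  unfolding Hq_iso_def Let_def
  by (rule exI[of _ id]) simp

lemma iso_trans:
  assumes "Hq_iso q m n d l \<theta> m' n' d' l' \<theta>'" "Hq_iso q m' n' d' l' \<theta>' m'' n'' d'' l'' \<theta>''"
  shows "Hq_iso q m n d l \<theta> m'' n'' d'' l'' \<theta>''"
proof -
  let ?V = "eig_space q m n d l \<theta>" and ?W = "eig_space q m' n' d' l' \<theta>'" and ?U = "eig_space q m'' n'' d'' l'' \<theta>''"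
  obtain f where f: "bij_betw f ?V ?W"
    "\<forall>u\<in>?V. \<forall>w\<in>?V. f (vadd u w) = vadd (f u) (f w)"
    "\<forall>a. \<forall>u\<in>?V. f (vsmul a u) = vsmul a (f u)"
    "\<forall>u\<in>?V. f (actA q m n d l u) = actA q m' n' d' l' (f u)"
    "\<forall>u\<in>?V. f (actB q m n d l u) = actB q m' n' d' l' (f u)"
    "\<forall>u\<in>?V. f (actC q m n d l u) = actC q m' n' d' l' (f u)"
    using assms(1) unfolding Hq_iso_def Let_def by blast
  obtain g where g: "bij_betw g ?W ?U"
    "\<forall>u\<in>?W. \<forall>w\<in>?W. g (vadd u w) = vadd (g u) (g w)"
    "\<forall>a. \<forall>u\<in>?W. g (vsmul a u) = vsmul a (g u)"
    "\<forall>u\<in>?W. g (actA q m' n' d' l' u) = actA q m'' n'' d'' l'' (g u)"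
    "\<forall>u\<in>?W. g (actB q m' n' d' l' u) = actB q m'' n'' d'' l'' (g u)"
    "\<forall>u\<in>?W. g (actC q m' n' d' l' u) = actC q m'' n'' d'' l'' (g u)"
    using assms(2) unfolding Hq_iso_def Let_def by blast
  have fW: "u \<in> ?V \<Longrightarrow> f u \<in> ?W" for u using f(1) by (auto simp: bij_betw_def)
  show ?thesis
    unfolding Hq_iso_def Let_def
    apply (rule exI[of _ "g \<circ> f"])
    using f g fW bij_betw_trans[OF f(1) g(1)] by simp
qed

lemma if_dir:
  fixes q :: complex and m n m' n' k k' :: nat and dl dl' lam lam' :: complex
  assumes q: "qok q" and d: "dl \<in> {1, -1}" and l: "lam \<noteq> 0" and km: "k \<le> m + n"
    and dd: "dl = dl'"
    and mem: "(m', n', k', lam') \<in>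
               {(m, n, k, lam),
                (m + n - k, k, n, lam * q powi (int k - int n)),
                (k, m + n - k, m, lam * q powi (int k - int m)),
                (n, m, m + n - k, lam * q powi (2 * int k - int m - int n))}"
  shows "Hq_iso q m n dl lam (dl * q powi (int m + int n - 2 * int k))
                 m' n' dl' lam' (dl' * q powi (int m' + int n' - 2 * int k'))"
proof -
  have q0: "q \<noteq> 0" using qok_nz[OF q] .
  consider "(m', n', k', lam') = (m, n, k, lam)"
    | "(m', n', k', lam') = (m + n - k, k, n, lam * q powi (int k - int n))"
    | "(m', n', k', lam') = (k, m + n - k, m, lam * q powi (int k - int m))"
    | "(m', n', k', lam') = (n, m, m + n - k, lam * q powi (2 * int k - int m - int n))"
    using mem by blast
  thus ?thesis
  proof cases
    case 1 thus ?thesis using dd iso_refl by simp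
  next
    case 2 thus ?thesis using dd iso2[OF q l d km] by simp
  next
    case 3 thus ?thesis using dd iso3[OF q l d km] by simp
  next
    case 4
    have l3: "lam * q powi (int k - int m) \<noteq> 0" using l q0 by simp
    have a: "Hq_iso q m n dl lam (dl * q powi (int m + int n - 2 * int k))
           k (m + n - k) dl (lam * q powi (int k - int m)) (dl * q powi (int k + int (m + n - k) - 2 * int m))"
      by (rule iso3[OF q l d km])
    have b: "Hq_iso q k (m + n - k) dl (lam * q powi (int k - int m)) (dl * q powi (int k + int (m + n - k) - 2 * int m))
        (k + (m + n - k) - m) m dl (lam * q powi (int k - int m) * q powi (int m - int (m + n - k)))
        (dl * q powi (int (k + (m + n - k) - m) + int m - 2 * int (m + n - k)))"
      by (rule iso2[OF q l3 d]) simp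
    have e1: "k + (m + n - k) - m = n" using km by simp
    have e2: "lam * q powi (int k - int m) * q powi (int m - int (m + n - k)) = lam * q powi (2 * int k - int m - int n)"
      using km q0 by (simp add: mult.assoc pmul of_nat_diff algebra_simps)
    have "Hq_iso q m n dl lam (dl * q powi (int m + int n - 2 * int k))
          n m dl (lam * q powi (2 * int k - int m - int n)) (dl * q powi (int n + int m - 2 * int (m + n - k)))"
      using iso_trans[OF a b] unfolding e1 e2 .
    thus ?thesis using 4 dd by simp
  qed
qed



definition av :: "complex \<Rightarrow> nat \<Rightarrow> complex \<Rightarrow> complex \<Rightarrow> nat \<Rightarrow> complex" where
  "av q n d l j = d * l * q powi (2 * int j - int n)"

lemma aD_closed:
  assumes q: "qok q" and d: "d \<in> {1,-1}" and l: "l \<noteq> 0"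
  shows "aD q m n d l i j = av q n d l j"
proof -
  have q0: "q \<noteq> 0" using qok_nz[OF q] .
  show ?thesis unfolding aD_def av_def using d l q0
    by (auto simp: power_int_minus[symmetric] field_simps power_int_diff)
qed

lemma av_nz: "qok q \<Longrightarrow> d \<in> {1,-1} \<Longrightarrow> l \<noteq> 0 \<Longrightarrow> av q n d l j \<noteq> 0"
  using qok_nz by (auto simp: av_def)

lemma av_Suc:
  assumes q: "qok q" shows "av q n d l (Suc j) = av q n d l j * q^2"
proof -
  have q0: "q \<noteq> 0" using qok_nz[OF q] .
  have "q powi (2 * int (Suc j) - int n) = q powi (2 * int j - int n) * q powi 2"
    using q0 by (simp add: psplit field_simps)
  thus ?thesis by (simp add: av_def)
qed

lemma av_cross:
  assumes q: "qok q" and d: "d \<in> {1,-1}" and d': "d' \<in> {1,-1}" and l: "l \<noteq> 0" and l': "l' \<noteq> 0"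
    and e1: "av q n d l x = av q n' d' l' y" and e2: "av q n' d' l' y' = av q n d l x'"
  shows "int x + int y' = int x' + int y"
proof -
  have q0: "q \<noteq> 0" using qok_nz[OF q] .
  have "av q n d l x * av q n' d' l' y' = av q n' d' l' y * av q n d l x'" using e1 e2 by simp
  then have "(d * l * d' * l') * (q powi (2 * int x - int n) * q powi (2 * int y' - int n'))
     = (d * l * d' * l') * (q powi (2 * int y - int n') * q powi (2 * int x' - int n))"
    by (simp add: av_def ac_simps)
  moreover have "d * l * d' * l' \<noteq> 0" using d d' l l' by auto
  ultimately have "q powi (2 * int x - int n) * q powi (2 * int y' - int n')
      = q powi (2 * int y - int n') * q powi (2 * int x' - int n)" by simp
  then have "q powi (2 * int x - int n + (2 * int y' - int n')) = q powi (2 * int y - int n' + (2 * int x' - int n))"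
    using q0 by (simp add: pmul)
  then have "2 * int x - int n + (2 * int y' - int n') = 2 * int y - int n' + (2 * int x' - int n)"
    using qpow_inj[OF q] by blast
  thus ?thesis by simp
qed

definition ev :: "nat \<Rightarrow> nat \<Rightarrow> vec" where
  "ev i0 j0 = (\<lambda>i j. if i = i0 \<and> j = j0 then 1 else 0)"

lemma eig_char:
  assumes q: "qok q" and d: "d \<in> {1,-1}" and l: "l \<noteq> 0"
  shows "(\<exists>c\<in>Vset m n k. c \<noteq> (\<lambda>i j. 0) \<and> actA q m n d l c = vsmul \<mu> c)
      \<longleftrightarrow> (\<exists>j. vld m n k (k - j) j \<and> \<mu> = av q n d l j)"
proof
  assume "\<exists>c\<in>Vset m n k. c \<noteq> (\<lambda>i j. 0) \<and> actA q m n d l c = vsmul \<mu> c"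
  then obtain c where c: "c \<in> Vset m n k" "c \<noteq> (\<lambda>i j. 0)" "actA q m n d l c = vsmul \<mu> c" by blast
  then obtain i j where nz: "c i j \<noteq> 0" by (meson ext)
  have v: "vld m n k i j" using c(1) nz by (auto simp: Vset_def)
  have "aD q m n d l i j * c i j = \<mu> * c i j" using fun_cong[OF fun_cong[OF c(3), of i], of j]
    by (simp add: actA_coord vsmul_def)
  then have "av q n d l j = \<mu>" using nz aD_closed[OF q d l] by simp
  moreover have "k - j = i" using v by (auto simp: vld_def)
  ultimately show "\<exists>j. vld m n k (k - j) j \<and> \<mu> = av q n d l j" using v by auto
next
  assume "\<exists>j. vld m n k (k - j) j \<and> \<mu> = av q n d l j"
  then obtain j where j: "vld m n k (k - j) j" "\<mu> = av q n d l j" by blast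
  let ?c = "ev (k - j) j"
  have "?c \<in> Vset m n k" using j by (auto simp: Vset_def ev_def)
  moreover have "?c \<noteq> (\<lambda>i j. 0)" by (metis ev_def zero_neq_one)
  moreover have "actA q m n d l ?c = vsmul \<mu> ?c"
    using j aD_closed[OF q d l] by (auto simp: fun_eq_iff actA_coord vsmul_def ev_def)
  ultimately show "\<exists>c\<in>Vset m n k. c \<noteq> (\<lambda>i j. 0) \<and> actA q m n d l c = vsmul \<mu> c" by blast
qed

lemma vcol_iff: "k \<le> m + n \<Longrightarrow> vld m n k (k - j) j \<longleftrightarrow> (k - m \<le> j \<and> j \<le> min n k)"
  by (auto simp: vld_def)



lemma extract_inv:
  fixes q :: complex and m n m' n' k k' :: nat and d d' l l' :: complex
  assumes q: "qok q" and d: "d \<in> {1,-1}" and d': "d' \<in> {1,-1}" and l: "l \<noteq> 0" and l': "l' \<noteq> 0"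
    and km: "k \<le> m + n" and km': "k' \<le> m' + n'"
    and iso: "Hq_iso q m n d l (d * q powi (int m + int n - 2 * int k)) m' n' d' l' (d' * q powi (int m' + int n' - 2 * int k'))"
  shows "av q n d l (k - m) = av q n' d' l' (k' - m')
     \<and> int (min n k) - int (k - m) = int (min n' k') - int (k' - m')
     \<and> cD q m n d l (k - (k - m)) (k - m) = cD q m' n' d' l' (k' - (k' - m')) (k' - m')
     \<and> bD q m n d l (k - (k - m)) (k - m) = bD q m' n' d' l' (k' - (k' - m')) (k' - m')"
proof -
  have q0: "q \<noteq> 0" using qok_nz[OF q] .
  let ?V = "Vset m n k" and ?W = "Vset m' n' k'"
  let ?z = "(\<lambda>i j. 0) :: vec"
  obtain f where bij: "bij_betw f ?V ?W"
    and lin1: "\<forall>u\<in>?V. \<forall>w\<in>?V. f (vadd u w) = vadd (f u) (f w)"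
    and lin2: "\<forall>a. \<forall>u\<in>?V. f (vsmul a u) = vsmul a (f u)"
    and iA: "\<forall>u\<in>?V. f (actA q m n d l u) = actA q m' n' d' l' (f u)"
    and iB: "\<forall>u\<in>?V. f (actB q m n d l u) = actB q m' n' d' l' (f u)"
    and iC: "\<forall>u\<in>?V. f (actC q m n d l u) = actC q m' n' d' l' (f u)"
    using iso unfolding Hq_iso_def Let_def eig_Vset[OF q d l] eig_Vset[OF q d' l'] by blast
  have fW: "u \<in> ?V \<Longrightarrow> f u \<in> ?W" for u using bij by (auto simp: bij_betw_def)
  have inj: "inj_on f ?V" using bij by (simp add: bij_betw_def)
  have zV: "?z \<in> ?V" by (simp add: Vset_def)
  have f0: "f ?z = ?z"
  proof -
    have "f (vsmul 0 ?z) = vsmul 0 (f ?z)" using lin2 zV by blast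
    thus ?thesis by (simp add: vsmul_def)
  qed
  have fnz: "u \<in> ?V \<Longrightarrow> u \<noteq> ?z \<Longrightarrow> f u \<noteq> ?z" for u
    using inj zV f0 by (metis inj_on_def)
  have transfer: "(\<exists>c\<in>?V. c \<noteq> ?z \<and> actA q m n d l c = vsmul \<mu> c) \<longleftrightarrow> (\<exists>c\<in>?W. c \<noteq> ?z \<and> actA q m' n' d' l' c = vsmul \<mu> c)" for \<mu>
  proof
    assume "\<exists>c\<in>?V. c \<noteq> ?z \<and> actA q m n d l c = vsmul \<mu> c"
    then obtain c where c: "c \<in> ?V" "c \<noteq> ?z" "actA q m n d l c = vsmul \<mu> c" by blast
    have "actA q m' n' d' l' (f c) = vsmul \<mu> (f c)" using iA lin2 c by metis
    thus "\<exists>c\<in>?W. c \<noteq> ?z \<and> actA q m' n' d' l' c = vsmul \<mu> c" using fW fnz c by blast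
  next
    assume "\<exists>c\<in>?W. c \<noteq> ?z \<and> actA q m' n' d' l' c = vsmul \<mu> c"
    then obtain w where w: "w \<in> ?W" "w \<noteq> ?z" "actA q m' n' d' l' w = vsmul \<mu> w" by blast
    obtain u where u: "u \<in> ?V" "w = f u" using w(1) bij by (auto simp: bij_betw_def)
    have unz: "u \<noteq> ?z" using u w(2) f0 by auto
    have "f (actA q m n d l u) = f (vsmul \<mu> u)" using iA lin2 u w(3) by metis
    then have "actA q m n d l u = vsmul \<mu> u"
      using inj u(1) Vset_A[OF u(1)] Vset_smul[OF u(1)] by (meson inj_onD)
    thus "\<exists>c\<in>?V. c \<noteq> ?z \<and> actA q m n d l c = vsmul \<mu> c" using u unz by blast
  qed
  have colsame: "(\<exists>j. (k - m \<le> j \<and> j \<le> min n k) \<and> \<mu> = av q n d l j)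
      \<longleftrightarrow> (\<exists>j. (k' - m' \<le> j \<and> j \<le> min n' k') \<and> \<mu> = av q n' d' l' j)" for \<mu>
    using transfer[of \<mu>] eig_char[OF q d l, of m n k \<mu>] eig_char[OF q d' l', of m' n' k' \<mu>]
      vcol_iff[OF km] vcol_iff[OF km'] by simp
  let ?j0 = "k - m" and ?j0' = "k' - m'" and ?j1 = "min n k" and ?j1' = "min n' k'"
  have le0: "?j0 \<le> ?j1" "?j0' \<le> ?j1'" using km km' by auto
  have "\<exists>j. (?j0 \<le> j \<and> j \<le> ?j1) \<and> av q n d l ?j0 = av q n d l j" using le0 by blast
  then obtain p' where p': "?j0' \<le> p'" "p' \<le> ?j1'" "av q n d l ?j0 = av q n' d' l' p'"
    using colsame[of "av q n d l ?j0"] by blast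
  have "\<exists>j. (?j0' \<le> j \<and> j \<le> ?j1') \<and> av q n' d' l' ?j0' = av q n' d' l' j" using le0 by blast
  then obtain p where p: "?j0 \<le> p" "p \<le> ?j1" "av q n' d' l' ?j0' = av q n d l p"
    using colsame[of "av q n' d' l' ?j0'"] by metis
  have "int ?j0 + int ?j0' = int p + int p'" using av_cross[OF q d d' l l' p'(3) p(3)] by simp
  then have pp: "p' = ?j0'" using p p' by linarith
  have XA: "av q n d l ?j0 = av q n' d' l' ?j0'" using p'(3) pp by simp
  have "\<exists>j. (?j0 \<le> j \<and> j \<le> ?j1) \<and> av q n d l ?j1 = av q n d l j" using le0 by blast
  then obtain r' where r': "?j0' \<le> r'" "r' \<le> ?j1'" "av q n d l ?j1 = av q n' d' l' r'"
    using colsame[of "av q n d l ?j1"] by blast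
  have "\<exists>j. (?j0' \<le> j \<and> j \<le> ?j1') \<and> av q n' d' l' ?j1' = av q n' d' l' j" using le0 by blast
  then obtain r where r: "?j0 \<le> r" "r \<le> ?j1" "av q n' d' l' ?j1' = av q n d l r"
    using colsame[of "av q n' d' l' ?j1'"] by metis
  have "int ?j1 + int ?j1' = int r + int r'" using av_cross[OF q d d' l l' r'(3) r(3)] by simp
  then have rr: "r' = ?j1'" using r r' by linarith
  have XB: "av q n d l ?j1 = av q n' d' l' ?j1'" using r'(3) rr by simp
  have "int ?j0 + int ?j1' = int ?j1 + int ?j0'" using av_cross[OF q d d' l l' XA XB[symmetric]] .
  then have D: "int ?j1 - int ?j0 = int ?j1' - int ?j0'" by simp
  let ?i0 = "k - ?j0" and ?i0' = "k' - ?j0'"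
  let ?X = "av q n d l ?j0"
  have v0: "vld m n k ?i0 ?j0" using km by (auto simp: vld_def)
  have v0': "vld m' n' k' ?i0' ?j0'" using km' by (auto simp: vld_def)
  let ?u = "ev ?i0 ?j0"
  have uV: "?u \<in> ?V" using v0 by (auto simp: Vset_def ev_def)
  have unz: "?u \<noteq> ?z" by (metis ev_def zero_neq_one)
  have Au: "actA q m n d l ?u = vsmul ?X ?u"
    using aD_closed[OF q d l] by (auto simp: fun_eq_iff actA_coord vsmul_def ev_def)
  define w where "w = f ?u"
  have wW: "w \<in> ?W" using fW[OF uV] by (simp add: w_def)
  have wnz: "w \<noteq> ?z" using fnz[OF uV unz] by (simp add: w_def)
  have Aw: "actA q m' n' d' l' w = vsmul ?X w"
    using iA lin2 uV Au unfolding w_def by metis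
  have wsupp: "w i j \<noteq> 0 \<Longrightarrow> i = ?i0' \<and> j = ?j0'" for i j
  proof -
    assume nz: "w i j \<noteq> 0"
    have v: "vld m' n' k' i j" using wW nz by (auto simp: Vset_def)
    have "aD q m' n' d' l' i j * w i j = ?X * w i j" using fun_cong[OF fun_cong[OF Aw, of i], of j]
      by (simp add: actA_coord vsmul_def)
    then have "av q n' d' l' j = av q n' d' l' ?j0'" using nz aD_closed[OF q d' l'] XA by simp
    then have "int j + int ?j0' = int ?j0' + int j" by simp
    have "j = ?j0'"
      using av_cross[OF q d' d' l' l' \<open>av q n' d' l' j = av q n' d' l' ?j0'\<close> refl] by simp
    moreover have "i = k' - j" using v by (auto simp: vld_def)
    ultimately show ?thesis by simp
  qed
  define w0 where "w0 = w ?i0' ?j0'"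
  have w0nz: "w0 \<noteq> 0"
  proof
    assume "w0 = 0"
    then have "w = ?z" using wsupp unfolding w0_def by (metis ext)
    thus False using wnz by simp
  qed
  have Xnz: "?X \<noteq> 0" using av_nz[OF q d l] .
  have q2: "q^2 \<noteq> 1" using qsq_ne1[OF q] .
  have Xq: "?X - ?X * q^2 \<noteq> 0"
  proof
    assume "?X - ?X * q^2 = 0"
    then have "?X * (1 - q^2) = 0" by (simp add: algebra_simps)
    thus False using Xnz q2 by simp
  qed
  have aDj0': "aD q m' n' d' l' ?i0' ?j0' = ?X" using aD_closed[OF q d' l'] XA by simp
  have aDsuc: "aD q m n d l i (Suc ?j0) = ?X * q^2" for i using aD_closed[OF q d l] av_Suc[OF q] by simp
  define zC where "zC = vadd (actA q m n d l (actC q m n d l ?u)) (vsmul (- (?X * q^2)) (actC q m n d l ?u))"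
  have zCcoord: "zC i j = (aD q m n d l i j - ?X * q^2) * (cD q m n d l i j * ?u i j + cM q m n d l i j * ?u (i+1) (j-1))" for i j
    by (simp add: zC_def vadd_def vsmul_def actA_coord actC_coord algebra_simps)
  have zCeq: "zC = vsmul ((?X - ?X * q^2) * cD q m n d l ?i0 ?j0) ?u"
  proof (rule ext, rule ext)
    fix i j
    show "zC i j = vsmul ((?X - ?X * q^2) * cD q m n d l ?i0 ?j0) ?u i j"
    proof (cases "i = ?i0 \<and> j = ?j0")
      case True thus ?thesis using aD_closed[OF q d l] by (simp add: zCcoord vsmul_def ev_def)
    next
      case False
      have "(aD q m n d l i j - ?X * q^2) * (cM q m n d l i j * ?u (i+1) (j-1)) = 0"
      proof (cases "j = Suc ?j0 \<and> i + 1 = ?i0")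
        case True thus ?thesis using aDsuc by simp
      next
        case False2: False
        show ?thesis
        proof (cases "j = 0")
          case True thus ?thesis by simp
        next
          case False3: False
          then have "?u (i+1) (j-1) = 0" using False2 by (auto simp: ev_def)
          thus ?thesis by simp
        qed
      qed
      moreover have t1: "?u i j = 0" using False by (simp add: ev_def)
      ultimately have "zC i j = 0" by (simp add: zCcoord)
      thus ?thesis using t1 by (simp add: vsmul_def)
    qed
  qed
  have CuV: "actC q m n d l ?u \<in> ?V" by (rule Vset_C[OF uV])
  have fzC: "f zC = vadd (actA q m' n' d' l' (actC q m' n' d' l' w)) (vsmul (- (?X * q^2)) (actC q m' n' d' l' w))"
    unfolding zC_def using lin1 lin2 iA iC uV CuV Vset_A[OF CuV] Vset_smul[OF CuV] w_def by metis
  have fzC2: "f zC = vsmul ((?X - ?X * q^2) * cD q m n d l ?i0 ?j0) w"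
    unfolding zCeq using lin2 uV w_def by metis
  have wcM: "cM q m' n' d' l' ?i0' ?j0' * w (?i0'+1) (?j0'-1) = 0"
    using wsupp[of "?i0'+1" "?j0'-1"] by (cases "?j0' = 0") auto
  have "(?X - ?X * q^2) * cD q m n d l ?i0 ?j0 * w0 = (?X - ?X * q^2) * (cD q m' n' d' l' ?i0' ?j0' * w0)"
  proof -
    have "f zC ?i0' ?j0' = (aD q m' n' d' l' ?i0' ?j0' - ?X * q^2) *
        (cD q m' n' d' l' ?i0' ?j0' * w0 + cM q m' n' d' l' ?i0' ?j0' * w (?i0'+1) (?j0'-1))"
      unfolding fzC by (simp add: vadd_def vsmul_def actA_coord actC_coord algebra_simps w0_def)
    also have "\<dots> = (?X - ?X * q^2) * (cD q m' n' d' l' ?i0' ?j0' * w0)" using wcM aDj0' by simp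
    finally show ?thesis using fzC2 by (simp add: vsmul_def w0_def)
  qed
  then have YC: "cD q m n d l ?i0 ?j0 = cD q m' n' d' l' ?i0' ?j0'" using Xq w0nz by simp
  define zB where "zB = vadd (actA q m n d l (actB q m n d l ?u)) (vsmul (- (?X * q^2)) (actB q m n d l ?u))"
  have BuV: "actB q m n d l ?u \<in> ?V" by (rule Vset_B[OF uV])
  have zBV: "zB \<in> ?V" unfolding zB_def by (rule Vset_add[OF Vset_A[OF BuV] Vset_smul[OF BuV]])
  have zBcoord: "zB i j = (aD q m n d l i j - ?X * q^2) * (bD q m n d l i j * ?u i j + bM q m n d l i j * ?u (i+1) (j-1)
        + bP q m n d l i j * ?u (i-1) (j+1))" for i j
    by (simp add: zB_def vadd_def vsmul_def actA_coord actB_coord algebra_simps)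
  have zBeq: "zB = vsmul ((?X - ?X * q^2) * bD q m n d l ?i0 ?j0) ?u"
  proof (rule ext, rule ext)
    fix i j
    show "zB i j = vsmul ((?X - ?X * q^2) * bD q m n d l ?i0 ?j0) ?u i j"
    proof (cases "i = ?i0 \<and> j = ?j0")
      case True thus ?thesis using aD_closed[OF q d l] by (simp add: zBcoord vsmul_def ev_def)
    next
      case False
      show ?thesis
      proof (cases "0 < i \<and> i = ?i0 + 1 \<and> j + 1 = ?j0")
        case True
        have "\<not> vld m n k i j" using True km by (auto simp: vld_def)
        then have "zB i j = 0" using zBV by (simp add: Vset_def)
        moreover have t1: "?u i j = 0" using False by (simp add: ev_def)
        ultimately show ?thesis by (simp add: vsmul_def)
      next
        case F2: False
        have t2: "(aD q m n d l i j - ?X * q^2) * (bM q m n d l i j * ?u (i+1) (j-1)) = 0"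
        proof (cases "j = Suc ?j0 \<and> i + 1 = ?i0")
          case True thus ?thesis using aDsuc by simp
        next
          case False2: False
          show ?thesis
          proof (cases "j = 0")
            case True thus ?thesis by simp
          next
            case False3: False
            then have "?u (i+1) (j-1) = 0" using False2 by (auto simp: ev_def)
            thus ?thesis by simp
          qed
        qed
        have t3: "bP q m n d l i j * ?u (i-1) (j+1) = 0"
        proof (cases "i = 0")
          case True thus ?thesis by simp
        next
          case False3: False
          then have "?u (i-1) (j+1) = 0" using F2 by (auto simp: ev_def)
          thus ?thesis by simp
        qed
        have t1: "?u i j = 0" using False by (simp add: ev_def)
        have "zB i j = (aD q m n d l i j - ?X * q^2) * (bM q m n d l i j * ?u (i+1) (j-1))"
          using t3 t1 by (simp add: zBcoord)
        thus ?thesis using t2 t1 by (simp add: vsmul_def)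
      qed
    qed
  qed
  have fzB: "f zB = vadd (actA q m' n' d' l' (actB q m' n' d' l' w)) (vsmul (- (?X * q^2)) (actB q m' n' d' l' w))"
    unfolding zB_def using lin1 lin2 iA iB uV BuV Vset_A[OF BuV] Vset_smul[OF BuV] w_def by metis
  have fzB2: "f zB = vsmul ((?X - ?X * q^2) * bD q m n d l ?i0 ?j0) w"
    unfolding zBeq using lin2 uV w_def by metis
  have wbM: "bM q m' n' d' l' ?i0' ?j0' * w (?i0'+1) (?j0'-1) = 0"
    using wsupp[of "?i0'+1" "?j0'-1"] by (cases "?j0' = 0") auto
  have wbP: "bP q m' n' d' l' ?i0' ?j0' * w (?i0'-1) (?j0'+1) = 0"
    using wsupp[of "?i0'-1" "?j0'+1"] by auto
  have "(?X - ?X * q^2) * bD q m n d l ?i0 ?j0 * w0 = (?X - ?X * q^2) * (bD q m' n' d' l' ?i0' ?j0' * w0)"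
  proof -
    have "f zB ?i0' ?j0' = (aD q m' n' d' l' ?i0' ?j0' - ?X * q^2) *
        (bD q m' n' d' l' ?i0' ?j0' * w0 + bM q m' n' d' l' ?i0' ?j0' * w (?i0'+1) (?j0'-1)
         + bP q m' n' d' l' ?i0' ?j0' * w (?i0'-1) (?j0'+1))"
      unfolding fzB by (simp add: vadd_def vsmul_def actA_coord actB_coord algebra_simps w0_def)
    also have "\<dots> = (?X - ?X * q^2) * (bD q m' n' d' l' ?i0' ?j0' * w0)" by (simp only: wbM wbP aDj0' add_0_right)
    finally show ?thesis using fzB2 by (simp add: vsmul_def w0_def)
  qed
  then have BB: "bD q m n d l ?i0 ?j0 = bD q m' n' d' l' ?i0' ?j0'" using Xq w0nz by simp
  show ?thesis using XA D YC BB by simp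
qed



lemma inv_formulas:
  fixes q l d :: complex and m n k :: nat
  assumes q: "qok q" and l: "l \<noteq> 0" and d: "d \<in> {1,-1}" and km: "k \<le> m + n"
  defines "S \<equiv> int m + int n" and "a \<equiv> \<bar>int m - int k\<bar>" and "b \<equiv> \<bar>int k - int n\<bar>"
  shows "av q n d l (k - m) = d * (l * q powi (int k - S)) * q powi a"
    and "cD q m n d l (k - (k - m)) (k - m) = l * q powi (int k - a)"
    and "2 * (int (min n k) - int (k - m)) = S - a - b"
    and "bD q m n d l (k - (k - m)) (k - m) = d * (q powi (S + 1) - q powi (S - 2*a - 1) + q powi (b - a - 1) + q powi (- a - b - 1))"
proof -
  have q0: "q \<noteq> 0" using qok_nz[OF q] .
  have J: "int (k - m) = (if m \<le> k then int k - int m else 0)" by auto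
  have I: "int (k - (k - m)) = (if m \<le> k then int m else int k)" by auto
  have A: "a = (if m \<le> k then int k - int m else int m - int k)" unfolding a_def by auto
  have B: "b = (if n \<le> k then int k - int n else int n - int k)" unfolding b_def by auto
  show "av q n d l (k - m) = d * (l * q powi (int k - S)) * q powi a"
    unfolding av_def J A S_def using q0 by (cases "m \<le> k") (auto simp: psplit field_simps power2_eq_square)
  show "cD q m n d l (k - (k - m)) (k - m) = l * q powi (int k - a)"
    unfolding cD_def I A using q0 l by (cases "m \<le> k") (auto simp: psplit field_simps power2_eq_square)
  show "2 * (int (min n k) - int (k - m)) = S - a - b"
    unfolding S_def A B using km by (cases "m \<le> k"; cases "n \<le> k") (auto simp: min_def)
  have v: "k - (k - m) \<le> m" "k - m \<le> n" using km by auto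
  show "bD q m n d l (k - (k - m)) (k - m) = d * (q powi (S + 1) - q powi (S - 2*a - 1) + q powi (b - a - 1) + q powi (- a - b - 1))"
    unfolding bD_closed[OF q l d v] of_nat_diff I J A B S_def using q0
    by (cases "m \<le> k"; cases "n \<le> k") (auto simp: psplit field_simps power2_eq_square)
qed



lemma only_if_dir:
  fixes q :: complex and m n m' n' k k' :: nat and dl dl' lam lam' :: complex
  assumes q: "qok q" and d: "dl \<in> {1, -1}" and d': "dl' \<in> {1, -1}" and l: "lam \<noteq> 0" and l': "lam' \<noteq> 0"
    and km: "k \<le> m + n" and km': "k' \<le> m' + n'"
    and iso: "Hq_iso q m n dl lam (dl * q powi (int m + int n - 2 * int k))
                 m' n' dl' lam' (dl' * q powi (int m' + int n' - 2 * int k'))"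
  shows "dl = dl' \<and>
             (m', n', k', lam') \<in>
               {(m, n, k, lam),
                (m + n - k, k, n, lam * q powi (int k - int n)),
                (k, m + n - k, m, lam * q powi (int k - int m)),
                (n, m, m + n - k, lam * q powi (2 * int k - int m - int n))}"
proof -
  have q0: "q \<noteq> 0" using qok_nz[OF q] .
  define S a b where "S = int m + int n" and "a = \<bar>int m - int k\<bar>" and "b = \<bar>int k - int n\<bar>"
  define S' a' b' where "S' = int m' + int n'" and "a' = \<bar>int m' - int k'\<bar>" and "b' = \<bar>int k' - int n'\<bar>"
  note F = inv_formulas[OF q l d km, folded S_def a_def b_def]
  note F' = inv_formulas[OF q l' d' km', folded S'_def a'_def b'_def]
  note E = extract_inv[OF q d d' l l' km km' iso]
  have E1: "dl * (lam * q powi (int k - S)) * q powi a = dl' * (lam' * q powi (int k' - S')) * q powi a'"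
    using E F(1) F'(1) by simp
  have E2: "lam * q powi (int k - a) = lam' * q powi (int k' - a')" using E F(2) F'(2) by simp
  have ED: "int (min n k) - int (k - m) = int (min n' k') - int (k' - m')" using E by blast
  have E3: "S - a - b = S' - a' - b'"
  proof -
    have "S - a - b = 2 * (int (min n k) - int (k - m))" using F(3) by simp
    also have "\<dots> = 2 * (int (min n' k') - int (k' - m'))" using ED by simp
    also have "\<dots> = S' - a' - b'" using F'(3) by simp
    finally show ?thesis .
  qed
  have E4: "dl * (q powi (S + 1) - q powi (S - 2*a - 1) + q powi (b - a - 1) + q powi (- a - b - 1))
      = dl' * (q powi (S' + 1) - q powi (S' - 2*a' - 1) + q powi (b' - a' - 1) + q powi (- a' - b' - 1))"
    using E F(4) F'(4) by simp
  have rel: "dl * (lam * q powi (int k - S)) * q powi a = dl * q powi (2*a - S) * (lam * q powi (int k - a))"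
    for dl lam :: complex and k :: nat and S a :: int
    using q0 by (simp add: psplit field_simps power2_eq_square)
  have Ynz: "lam * q powi (int k - a) \<noteq> 0" using l q0 by simp
  have "dl * q powi (2*a - S) * (lam * q powi (int k - a)) = dl' * q powi (2*a' - S') * (lam * q powi (int k - a))"
    using E1 E2 rel by metis
  then have "dl * q powi (2*a - S) = dl' * q powi (2*a' - S')" using Ynz q0 by simp
  from sign_pow_eq[OF q d d' this] have dd: "dl = dl'" and ea: "2*a - S = 2*a' - S'" by auto
  have dnz: "dl \<noteq> 0" using d by auto
  have x1: "S - 2*a - 1 = S' - 2*a' - 1" using ea by simp
  have x2: "b - a - 1 = b' - a' - 1" using ea E3 by simp
  have "q powi (S + 1) - q powi (S - 2*a - 1) + q powi (b - a - 1) + q powi (- a - b - 1)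
      = q powi (S' + 1) - q powi (S' - 2*a' - 1) + q powi (b' - a' - 1) + q powi (- a' - b' - 1)"
    using E4 dd dnz by simp
  then have "q powi (S + 1) + q powi (- a - b - 1) = q powi (S' + 1) + q powi (- a' - b' - 1)"
    unfolding x1 x2 by (simp add: algebra_simps)
  moreover have "(S + 1) + (- a - b - 1) = (S' + 1) + (- a' - b' - 1)" using E3 by simp
  ultimately have pp: "(S + 1 = S' + 1 \<and> - a - b - 1 = - a' - b' - 1) \<or> (S + 1 = - a' - b' - 1 \<and> - a - b - 1 = S' + 1)"
    using pair_pow[OF q] by blast
  have nn: "S \<ge> 0" "a \<ge> 0" "b \<ge> 0" "S' \<ge> 0" "a' \<ge> 0" "b' \<ge> 0"
    by (auto simp: S_def a_def b_def S'_def a'_def b'_def)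
  have SS: "S = S'" using pp nn by linarith
  have aa: "a = a'" using ea SS by simp
  have bb: "b = b'" using E3 SS aa by simp
  have ll: "lam' = lam * q powi (int k - int k')"
  proof -
    have "lam' * q powi (int k' - a) = lam * q powi (int k - a)" using E2 aa by simp
    then have "lam' = lam * q powi (int k - a) / q powi (int k' - a)" using q0 by (simp add: field_simps)
    also have "\<dots> = lam * q powi (int k - int k')" using q0 by (simp add: psplit field_simps)
    finally show ?thesis .
  qed
  have A: "int m' - int k' = int m - int k \<or> int m' - int k' = int k - int m"
    using aa unfolding a_def a'_def by linarith
  have B: "int k' - int n' = int k - int n \<or> int k' - int n' = int n - int k"
    using bb unfolding b_def b'_def by linarith
  have S2: "int m' + int n' = int m + int n" using SS unfolding S_def S'_def by simp
  show ?thesis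
  proof (rule conjI[OF dd])
    from A B show "(m', n', k', lam') \<in> {(m, n, k, lam), (m + n - k, k, n, lam * q powi (int k - int n)),
                (k, m + n - k, m, lam * q powi (int k - int m)),
                (n, m, m + n - k, lam * q powi (2 * int k - int m - int n))}"
    proof (elim disjE)
      assume h1: "int m' - int k' = int m - int k" and h2: "int k' - int n' = int k - int n"
      have "m' = m" "n' = n" "k' = k" using h1 h2 S2 by linarith+
      thus ?thesis using ll by simp
    next
      assume h1: "int m' - int k' = int m - int k" and h2: "int k' - int n' = int n - int k"
      have "m' = m + n - k" "n' = k" "k' = n" using h1 h2 S2 km by linarith+
      thus ?thesis using ll by simp
    next
      assume h1: "int m' - int k' = int k - int m" and h2: "int k' - int n' = int k - int n"
      have "m' = k" "n' = m + n - k" "k' = m" using h1 h2 S2 km by linarith+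
      thus ?thesis using ll by simp
    next
      assume h1: "int m' - int k' = int k - int m" and h2: "int k' - int n' = int n - int k"
      have e: "m' = n" "n' = m" "k' = m + n - k" using h1 h2 S2 km by linarith+
      have ex: "int k - int (m + n - k) = 2 * int k - int m - int n" using km by simp
      have T: "(m', n', k', lam') = (n, m, m + n - k, lam * q powi (2 * int k - int m - int n))"
        unfolding ll e ex by (rule refl)
      show ?thesis unfolding T by blast
    qed
  qed
qed

theorem mainTheorem13:
  fixes q :: complex and m n m' n' k k' :: nat and dl dl' lam lam' :: complex
  assumes "q \<noteq> 0" and "\<forall>r::nat. 0 < r \<longrightarrow> q ^ r \<noteq> 1"
    and "dl \<in> {1, -1}" and "dl' \<in> {1, -1}"
    and "lam \<noteq> 0" and "lam' \<noteq> 0"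
    and "k \<le> m + n" and "k' \<le> m' + n'"
  shows "Hq_iso q m n dl lam (dl * q powi (int m + int n - 2 * int k))
                 m' n' dl' lam' (dl' * q powi (int m' + int n' - 2 * int k'))
         \<longleftrightarrow> dl = dl' \<and>
             (m', n', k', lam') \<in>
               {(m, n, k, lam),
                (m + n - k, k, n, lam * q powi (int k - int n)),
                (k, m + n - k, m, lam * q powi (int k - int m)),
                (n, m, m + n - k, lam * q powi (2 * int k - int m - int n))}"
proof -
  have q: "qok q" using assms(1,2) by (simp add: qok_def)
  show ?thesis
  proof
    assume "Hq_iso q m n dl lam (dl * q powi (int m + int n - 2 * int k))
                 m' n' dl' lam' (dl' * q powi (int m' + int n' - 2 * int k'))"
    thus "dl = dl' \<and> (m', n', k', lam') \<in> {(m, n, k, lam), (m + n - k, k, n, lam * q powi (int k - int n)),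
                (k, m + n - k, m, lam * q powi (int k - int m)),
                (n, m, m + n - k, lam * q powi (2 * int k - int m - int n))}"
      using only_if_dir[OF q assms(3,4,5,6,7,8)] by blast
  next
    assume h: "dl = dl' \<and> (m', n', k', lam') \<in> {(m, n, k, lam), (m + n - k, k, n, lam * q powi (int k - int n)),
                (k, m + n - k, m, lam * q powi (int k - int m)),
                (n, m, m + n - k, lam * q powi (2 * int k - int m - int n))}"
    show "Hq_iso q m n dl lam (dl * q powi (int m + int n - 2 * int k))
                 m' n' dl' lam' (dl' * q powi (int m' + int n' - 2 * int k'))"
      using if_dir[OF q assms(3,5,7)] h by blast
  qed
qed


end
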